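(* Let $J$ be exponentially localized, even, twice continuously differentiable, with $\int J=1$, and let $\gamma>0$. Let $D=\partial_x(1-\partial_x)^{-1}$ and $\delta$ the Dirac distribution. Then there is a convolution operator $J_2$, bounded from $H^1_\gamma$ to $H^1_\gamma$ and commuting with $D$, such that $(J-\delta)\ast u=D(J_2\ast u)=J_2\ast(Du)$. In particular, the composition $u\mapsto J_2\ast(Du)$ is bounded from $M^{1,2}_{\gamma-1}$ to $H^1_\gamma$ (with $D:M^{1,2}_{\gamma-1}\to H^1_\gamma$ bounded and $J_2:H^1_\gamma\to H^1_\gamma$ bounded).
   Context: $\langle x\rangle=(1+x^2)^{1/2}$; $L^2_\gamma$, $H^1_\gamma$ are completions of $C_0^\infty(\mathbb{R})$ under $(\int|u\langle x\rangle^\gamma|^2)^{1/2}$ and $\|u\|_{L^2_\gamma}+\|\partial_xu\|_{L^2_\gamma}$; $M^{1,2}_\gamma$ is the completion under $\big(\|u\langle x\rangle^\gamma\|_{L^2}^2+\|\partial_xu\langle x\rangle^{\gamma+1}\|_{L^2}^2\big)^{1/2}$. *)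

theory Defs
  imports "HOL-Analysis.Analysis"
begin

definition jbr :: "real \<Rightarrow> real" where
  "jbr x = sqrt (1 + x\<^sup>2)"

definition test_fun :: "(real \<Rightarrow> real) \<Rightarrow> bool" where
  "test_fun u \<longleftrightarrow> (\<exists>R. \<forall>x. R < \<bar>x\<bar> \<longrightarrow> u x = 0) \<and>
                   (\<forall>k x. ((deriv ^^ k) u) differentiable (at x))"

definition conv :: "(real \<Rightarrow> real) \<Rightarrow> (real \<Rightarrow> real) \<Rightarrow> real \<Rightarrow> real" where
  "conv g u x = (\<integral>y. g (x - y) * u y \<partial>lborel)"

text \<open>Resolvent (1 - d/dx)^(-1): the bounded solution v of v - v' = u.\<close>
definition resolv :: "(real \<Rightarrow> real) \<Rightarrow> real \<Rightarrow> real" where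
  "resolv u x = (\<integral>y. indicator {x..} y * (exp (x - y) * u y) \<partial>lborel)"

definition Dop :: "(real \<Rightarrow> real) \<Rightarrow> real \<Rightarrow> real" where
  "Dop u = deriv (resolv u)"

definition L2w :: "real \<Rightarrow> (real \<Rightarrow> real) \<Rightarrow> real" where
  "L2w \<gamma> u = sqrt (\<integral>x. (u x * jbr x powr \<gamma>)\<^sup>2 \<partial>lborel)"

definition in_H1w :: "real \<Rightarrow> (real \<Rightarrow> real) \<Rightarrow> bool" where
  "in_H1w \<gamma> u \<longleftrightarrow> (\<forall>x. u differentiable (at x)) \<and>
     integrable lborel (\<lambda>x. (u x * jbr x powr \<gamma>)\<^sup>2) \<and>
     integrable lborel (\<lambda>x. (deriv u x * jbr x powr \<gamma>)\<^sup>2)"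

definition H1w_norm :: "real \<Rightarrow> (real \<Rightarrow> real) \<Rightarrow> real" where
  "H1w_norm \<gamma> u = L2w \<gamma> u + L2w \<gamma> (deriv u)"

definition M12_norm :: "real \<Rightarrow> (real \<Rightarrow> real) \<Rightarrow> real" where
  "M12_norm \<gamma> u = sqrt ((\<integral>x. (u x * jbr x powr \<gamma>)\<^sup>2 \<partial>lborel)
                        + (\<integral>x. (deriv u x * jbr x powr (\<gamma> + 1))\<^sup>2 \<partial>lborel))"

definition exp_localized :: "(real \<Rightarrow> real) \<Rightarrow> bool" where
  "exp_localized J \<longleftrightarrow> (\<exists>C \<eta>. 0 < \<eta> \<and> (\<forall>x. \<bar>J x\<bar> \<le> C * exp (- \<eta> * \<bar>x\<bar>)))"

end

theory Submission
  imports Defs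
begin



lemma jbr_ge1: "jbr x \<ge> 1"
  unfolding jbr_def by simp

lemma jbr_pos: "jbr x > 0"
  using jbr_ge1[of x] by linarith

lemma continuous_jbr[continuous_intros]: "continuous_on S jbr"
  unfolding jbr_def[abs_def] by (intro continuous_intros)

lemma jbr_le: "jbr x \<le> 1 + \<bar>x\<bar>"
  unfolding jbr_def
  by (rule real_le_lsqrt) (auto simp: power2_eq_square abs_mult_self_eq algebra_simps)

lemma jbr_powr_ge1: "0 \<le> g \<Longrightarrow> jbr x powr g \<ge> 1"
  using jbr_ge1 by (simp add: ge_one_powr_ge_zero)

lemma peetre_sq: "1 + x\<^sup>2 \<le> 2 * ((1 + (x - y)\<^sup>2) * (1 + (y::real)\<^sup>2))"
proof -
  have "0 \<le> (x - 2*y)\<^sup>2" by simp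
  then have "x\<^sup>2 \<le> 2 * (x - y)\<^sup>2 + 2 * y\<^sup>2"
    by (simp add: power2_eq_square algebra_simps)
  moreover have "0 \<le> y\<^sup>2 * (x - y)\<^sup>2" by simp
  moreover have "2 * ((1 + (x - y)\<^sup>2) * (1 + y\<^sup>2)) = 2 + 2*(x-y)\<^sup>2 + 2*y\<^sup>2 + 2*(y\<^sup>2 * (x - y)\<^sup>2)"
    by (simp add: algebra_simps)
  ultimately show ?thesis by linarith
qed

lemma peetre: assumes "0 \<le> g"
  shows "jbr x powr g \<le> 2 powr (g/2) * jbr (x - y) powr g * jbr y powr g"
proof -
  have "jbr x \<le> sqrt 2 * jbr (x - y) * jbr y"
  proof -
    have "sqrt (1 + x\<^sup>2) \<le> sqrt (2 * ((1 + (x - y)\<^sup>2) * (1 + y\<^sup>2)))"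
      using peetre_sq[of x y] by (rule real_sqrt_le_mono)
    then show ?thesis unfolding jbr_def by (simp add: real_sqrt_mult mult.assoc)
  qed
  then have "jbr x powr g \<le> (sqrt 2 * jbr (x - y) * jbr y) powr g"
    using assms less_imp_le[OF jbr_pos] by (intro powr_mono2) auto
  also have "\<dots> = sqrt 2 powr g * jbr (x - y) powr g * jbr y powr g"
    using jbr_pos by (simp add: powr_mult)
  also have "sqrt 2 powr g = 2 powr (g/2)"
    by (simp add: sqrt_def root_powr_inverse powr_powr)
  finally show ?thesis .
qed

lemma one_plus_le_exp: assumes "m \<ge> 1" "t \<ge> (0::real)"
  shows "1 + t \<le> m * exp (t / m)"
proof -
  have "1 + t / m \<le> exp (t / m)" by (rule exp_ge_add_one_self)
  then have "m * (1 + t/m) \<le> m * exp (t/m)" using assms by simp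
  moreover have "1 + t \<le> m * (1 + t/m)" using assms by (simp add: algebra_simps)
  ultimately show ?thesis by linarith
qed

lemma jbr_powr_le_exp: assumes "0 \<le> g" "0 < e"
  shows "\<exists>c>0. \<forall>x. jbr x powr g \<le> c * exp (e * \<bar>x\<bar>)"
proof -
  define m where "m = max 1 (g / e)"
  have m: "m \<ge> 1" "g / m \<le> e" using assms unfolding m_def
    by (auto simp: field_simps max_def)
  show ?thesis
  proof (intro exI[of _ "m powr g"] conjI allI)
    show "0 < m powr g" using m by simp
    fix x
    have "jbr x powr g \<le> (m * exp (\<bar>x\<bar> / m)) powr g"
      using jbr_le[of x] one_plus_le_exp[OF m(1), of "\<bar>x\<bar>"] less_imp_le[OF jbr_pos] assms
      by (intro powr_mono2) auto
    also have "\<dots> = m powr g * exp (g * \<bar>x\<bar> / m)"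
      using m by (simp add: powr_def ln_mult exp_add[symmetric] algebra_simps)
    also have "\<dots> \<le> m powr g * exp (e * \<bar>x\<bar>)"
    proof -
      have "g * \<bar>x\<bar> / m \<le> e * \<bar>x\<bar>"
        using m by (metis abs_ge_zero mult.commute mult_right_mono times_divide_eq_right)
      then show ?thesis by (intro mult_left_mono) auto
    qed
    finally show "jbr x powr g \<le> m powr g * exp (e * \<bar>x\<bar>)" .
  qed
qed




lemma borel_jbr[measurable]: "jbr \<in> borel_measurable borel"
  unfolding jbr_def[abs_def] by measurable

lemma integrable_exp_abs:
  assumes a: "0 < (a::real)"
  shows "integrable lborel (\<lambda>x. exp (- a * \<bar>x\<bar>))"
proof -
  have "(\<lambda>x. exp (-a*x)) absolutely_integrable_on {0..}"
    by (rule nonnegative_absolutely_integrable_1[OF integrable_on_exp_minus_to_infinity[OF a]]) auto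
  then have "integrable lebesgue (\<lambda>x. indicator {0..} x *\<^sub>R exp (-a*x))"
    unfolding set_integrable_def .
  then have i1: "integrable lborel (\<lambda>x. indicator {0..} x * exp (-a*x))"
    by (subst (asm) integrable_completion) auto
  have i2: "integrable lborel (\<lambda>x. indicator {0..} (0 + (-1) * x) * exp (-a*(0 + (-1)*x)))"
    by (rule lborel_integrable_real_affine[OF i1]) simp
  have "integrable lborel (\<lambda>x. indicator {0..} x * exp (-a*x) + indicator {0..} (0 + (-1) * x) * exp (-a*(0 + (-1)*x)))"
    using i1 i2 by (rule Bochner_Integration.integrable_add)
  then show ?thesis
    by (rule Bochner_Integration.integrable_bound) (auto simp: indicator_def)
qed

definition kern :: "real \<Rightarrow> (real \<Rightarrow> real) \<Rightarrow> bool" where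
  "kern g k \<longleftrightarrow> k \<in> borel_measurable borel \<and> integrable lborel (\<lambda>z. \<bar>k z\<bar> * jbr z powr g)
      \<and> (\<exists>\<alpha>. \<forall>z. \<bar>k z\<bar> * jbr z powr g \<le> \<alpha>)"

lemma expb_kern:
  assumes k: "k \<in> borel_measurable borel" and b: "\<And>z. \<bar>k z\<bar> \<le> A * exp (- \<eta> * \<bar>z\<bar>)"
    and eta: "0 < \<eta>" and g: "0 \<le> g"
  shows "kern g k"
proof -
  obtain c where c: "c > 0" "\<And>x. jbr x powr g \<le> c * exp ((\<eta>/2) * \<bar>x\<bar>)"
    using jbr_powr_le_exp[OF g, of "\<eta>/2"] eta by auto
  have A: "0 \<le> A"
  proof -
    have "0 \<le> A * exp (- \<eta> * \<bar>0\<bar>)" using b[of 0] by (meson abs_ge_zero order_trans)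
    then show ?thesis by simp
  qed
  have bnd: "\<bar>k z\<bar> * jbr z powr g \<le> A * c * exp (- (\<eta>/2) * \<bar>z\<bar>)" for z
  proof -
    have "\<bar>k z\<bar> * jbr z powr g \<le> A * exp (- \<eta> * \<bar>z\<bar>) * (c * exp ((\<eta>/2) * \<bar>z\<bar>))"
      using A by (intro mult_mono b c) auto
    also have "\<dots> = A * c * (exp (- \<eta> * \<bar>z\<bar>) * exp ((\<eta>/2) * \<bar>z\<bar>))" by simp
    also have "exp (- \<eta> * \<bar>z\<bar>) * exp ((\<eta>/2) * \<bar>z\<bar>) = exp (- (\<eta>/2) * \<bar>z\<bar>)"
      by (simp add: exp_add[symmetric] algebra_simps)
    finally show ?thesis .
  qed
  have "integrable lborel (\<lambda>z. A * c * exp (- (\<eta>/2) * \<bar>z\<bar>))"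
    using integrable_exp_abs[of "\<eta>/2"] eta by simp
  then have "integrable lborel (\<lambda>z. \<bar>k z\<bar> * jbr z powr g)"
  proof (rule Bochner_Integration.integrable_bound)
    show "(\<lambda>z. \<bar>k z\<bar> * jbr z powr g) \<in> borel_measurable lborel" using k by measurable
    show "AE x in lborel. norm (\<bar>k x\<bar> * jbr x powr g) \<le> norm (A * c * exp (- (\<eta> / 2) * \<bar>x\<bar>))"
    proof (intro AE_I2)
      fix x
      have "0 \<le> \<bar>k x\<bar> * jbr x powr g" by simp
      then show "norm (\<bar>k x\<bar> * jbr x powr g) \<le> norm (A * c * exp (- (\<eta> / 2) * \<bar>x\<bar>))"
        using bnd[of x] by simp
    qed
  qed
  moreover have "\<bar>k z\<bar> * jbr z powr g \<le> A * c" for z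
  proof -
    have "exp (- (\<eta>/2) * \<bar>z\<bar>) \<le> 1" using eta by simp
    then have "A * c * exp (- (\<eta>/2) * \<bar>z\<bar>) \<le> A * c * 1"
      using A c by (intro mult_left_mono) auto
    then show ?thesis using bnd[of z] by simp
  qed
  ultimately show ?thesis using k unfolding kern_def by blast
qed

lemma kern_meas: "kern g k \<Longrightarrow> k \<in> borel_measurable borel"
  by (simp add: kern_def)

lemma kern_integrable:
  assumes "kern g k" "0 \<le> g" shows "integrable lborel k"
proof -
  have "integrable lborel (\<lambda>z. \<bar>k z\<bar> * jbr z powr g)" using assms by (simp add: kern_def)
  then show ?thesis
  proof (rule Bochner_Integration.integrable_bound)
    show "k \<in> borel_measurable lborel" using assms by (simp add: kern_def)
    show "AE x in lborel. norm (k x) \<le> norm (\<bar>k x\<bar> * jbr x powr g)"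
    proof (intro AE_I2)
      fix x
      have "\<bar>k x\<bar> * 1 \<le> \<bar>k x\<bar> * jbr x powr g"
        using jbr_powr_ge1[OF assms(2)] by (intro mult_left_mono) auto
      then show "norm (k x) \<le> norm (\<bar>k x\<bar> * jbr x powr g)" by simp
    qed
  qed
qed

lemma kern_bounded:
  assumes "kern g k" "0 \<le> g" shows "\<exists>\<alpha>. \<forall>z. \<bar>k z\<bar> \<le> \<alpha>"
proof -
  obtain \<alpha> where a: "\<And>z. \<bar>k z\<bar> * jbr z powr g \<le> \<alpha>" using assms by (auto simp: kern_def)
  have "\<bar>k z\<bar> \<le> \<alpha>" for z
  proof -
    have "\<bar>k z\<bar> * 1 \<le> \<bar>k z\<bar> * jbr z powr g"
      using jbr_powr_ge1[OF assms(2)] by (intro mult_left_mono) auto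
    then show ?thesis using a[of z] by simp
  qed
  then show ?thesis by blast
qed




lemma quad_trick:
  fixes T A S :: real
  assumes "0 \<le> T" "0 \<le> A" "0 \<le> S" and H: "\<And>t. 0 < t \<Longrightarrow> T \<le> (t * A + S / t) / 2"
  shows "T\<^sup>2 \<le> A * S"
proof (cases "T = 0")
  case True then show ?thesis using assms by simp
next
  case False
  then have T: "T > 0" using assms by simp
  show ?thesis
  proof (cases "A = 0")
    case True
    define t where "t = (S + 1) / (2 * T)"
    have t: "t > 0" using T assms by (simp add: t_def)
    have "T \<le> (S / t) / 2" using H[OF t] True by simp
    also have "\<dots> = S * T / (S + 1)" using T assms by (simp add: t_def field_simps)
    also have "\<dots> < T" using T assms by (simp add: field_simps)
    finally show ?thesis by simp
  next
    case False
    then have A: "A > 0" using assms by simp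
    define t where "t = T / A"
    have t: "t > 0" using T A by (simp add: t_def)
    have "T \<le> (t * A + S / t) / 2" using H[OF t] .
    also have "\<dots> = (T + S * A / T) / 2" using T A by (simp add: t_def field_simps)
    finally have "T \<le> S * A / T" by simp
    then have "T * T \<le> S * A" using T by (simp add: field_simps)
    then show ?thesis by (simp add: power2_eq_square mult.commute)
  qed
qed

lemma young_w:
  fixes k w :: "real \<Rightarrow> real"
  assumes kk: "kern g k" and g: "0 \<le> g" and w[measurable]: "w \<in> borel_measurable borel"
    and wi: "integrable lborel (\<lambda>x. (w x * jbr x powr g)\<^sup>2)"
  shows "integrable lborel (\<lambda>x. (conv k w x * jbr x powr g)\<^sup>2) \<and>
    (\<integral>x. (conv k w x * jbr x powr g)\<^sup>2 \<partial>lborel) \<le>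
      2 powr g * (\<integral>z. \<bar>k z\<bar> * jbr z powr g \<partial>lborel)\<^sup>2 * (\<integral>x. (w x * jbr x powr g)\<^sup>2 \<partial>lborel)"
proof -
  have k[measurable]: "k \<in> borel_measurable borel" using kk by (simp add: kern_def)
  define a where "a z = \<bar>k z\<bar> * jbr z powr g" for z
  define b where "b y = \<bar>w y\<bar> * jbr y powr g" for y
  have a_meas[measurable]: "a \<in> borel_measurable borel" unfolding a_def[abs_def] by measurable
  have b_meas[measurable]: "b \<in> borel_measurable borel" unfolding b_def[abs_def] by measurable
  have ai: "integrable lborel a" using kk by (simp add: kern_def a_def[abs_def])
  obtain \<alpha> where al: "\<And>z. a z \<le> \<alpha>" using kk by (auto simp: kern_def a_def)
  have a0: "0 \<le> a z" for z by (simp add: a_def)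
  have b0: "0 \<le> b z" for z by (simp add: b_def)
  have bsq: "(b y)\<^sup>2 = (w y * jbr y powr g)\<^sup>2" for y by (simp add: b_def power2_eq_square abs_mult_self_eq)
  have bi: "integrable lborel (\<lambda>y. (b y)\<^sup>2)" using wi by (simp add: bsq)
  define A where "A = (\<integral>z. a z \<partial>lborel)"
  define B where "B = (\<integral>y. (b y)\<^sup>2 \<partial>lborel)"
  have A0: "0 \<le> A" unfolding A_def using a0 by simp
  have fxi: "integrable lborel (\<lambda>y. a (x - y))" for x
    using lborel_integrable_real_affine[OF ai, of "-1" x] by simp
  have fxA: "(\<integral>y. a (x - y) \<partial>lborel) = A" for x
    using lborel_integral_real_affine[of "-1" a x] by (simp add: A_def)
  have fb2i: "integrable lborel (\<lambda>y. a (x - y) * (b y)\<^sup>2)" for x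
  proof (rule Bochner_Integration.integrable_bound)
    show "integrable lborel (\<lambda>y. \<alpha> * (b y)\<^sup>2)" using bi by simp
    show "(\<lambda>y. a (x - y) * (b y)\<^sup>2) \<in> borel_measurable lborel" by measurable
    show "AE y in lborel. norm (a (x - y) * (b y)\<^sup>2) \<le> norm (\<alpha> * (b y)\<^sup>2)"
    proof (intro AE_I2)
      fix y
      have "a (x - y) * (b y)\<^sup>2 \<le> \<alpha> * (b y)\<^sup>2" using al by (intro mult_right_mono) auto
      then show "norm (a (x - y) * (b y)\<^sup>2) \<le> norm (\<alpha> * (b y)\<^sup>2)" using a0 by simp
    qed
  qed
  have fbi: "integrable lborel (\<lambda>y. a (x - y) * b y)" for x
  proof (rule Bochner_Integration.integrable_bound)
    show "integrable lborel (\<lambda>y. a (x - y) + a (x - y) * (b y)\<^sup>2)"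
      using fxi fb2i by (rule Bochner_Integration.integrable_add)
    show "(\<lambda>y. a (x - y) * b y) \<in> borel_measurable lborel" by measurable
    show "AE y in lborel. norm (a (x - y) * b y) \<le> norm (a (x - y) + a (x - y) * (b y)\<^sup>2)"
    proof (intro AE_I2)
      fix y
      have e: "(b y - 1)\<^sup>2 = (b y)\<^sup>2 - 2 * b y + 1" by (simp add: power2_eq_square algebra_simps)
      have "0 \<le> (b y - 1)\<^sup>2" by simp
      then have "b y \<le> 1 + (b y)\<^sup>2" using b0[of y] e by linarith
      then have "a (x - y) * b y \<le> a (x - y) * (1 + (b y)\<^sup>2)" using a0 by (intro mult_left_mono) auto
      then show "norm (a (x - y) * b y) \<le> norm (a (x - y) + a (x - y) * (b y)\<^sup>2)"
        using a0[of "x-y"] b0[of y] by (simp add: algebra_simps)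
    qed
  qed
  define S where "S x = (\<integral>y. a (x - y) * (b y)\<^sup>2 \<partial>lborel)" for x
  define T where "T x = (\<integral>y. a (x - y) * b y \<partial>lborel)" for x
  have S0: "0 \<le> S x" for x unfolding S_def using a0 by simp
  have T0: "0 \<le> T x" for x unfolding T_def using a0 b0 by simp
  have TS: "(T x)\<^sup>2 \<le> A * S x" for x
  proof (rule quad_trick[OF T0 A0 S0])
    fix t :: real assume t: "0 < t"
    have "T x \<le> (\<integral>y. (t * a (x - y) + a (x - y) * (b y)\<^sup>2 / t) / 2 \<partial>lborel)"
      unfolding T_def
    proof (rule integral_mono)
      show "integrable lborel (\<lambda>y. a (x - y) * b y)" by (rule fbi)
      show "integrable lborel (\<lambda>y. (t * a (x - y) + a (x - y) * (b y)\<^sup>2 / t) / 2)"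
        using fxi fb2i by auto
      fix y
      have "0 \<le> (b y - t)\<^sup>2 / t" using t by simp
      then have "b y \<le> (t + (b y)\<^sup>2 / t) / 2" using t by (simp add: power2_eq_square field_simps)
      then have "a (x - y) * b y \<le> a (x - y) * ((t + (b y)\<^sup>2 / t) / 2)" using a0 by (intro mult_left_mono) auto
      then show "a (x - y) * b y \<le> (t * a (x - y) + a (x - y) * (b y)\<^sup>2 / t) / 2"
        by (simp add: algebra_simps)
    qed
    also have "\<dots> = (t * A + S x / t) / 2"
      using fxi fb2i by (simp add: fxA S_def)
    finally show "T x \<le> (t * A + S x / t) / 2" .
  qed
  have pw: "\<bar>conv k w x\<bar> * jbr x powr g \<le> 2 powr (g/2) * T x" for x
  proof -
    have "\<bar>conv k w x\<bar> * jbr x powr g = \<bar>\<integral>y. k (x - y) * w y * jbr x powr g \<partial>lborel\<bar>"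
      unfolding conv_def by (simp add: abs_mult)
    also have "\<dots> \<le> (\<integral>y. 2 powr (g/2) * (a (x - y) * b y) \<partial>lborel)"
    proof (rule integral_abs_bound_integral)
      show gi: "integrable lborel (\<lambda>y. 2 powr (g/2) * (a (x - y) * b y))" using fbi by simp
      have bd: "\<bar>k (x - y) * w y * jbr x powr g\<bar> \<le> 2 powr (g/2) * (a (x - y) * b y)" for y
      proof -
        have "\<bar>k (x - y) * w y * jbr x powr g\<bar> = \<bar>k (x - y)\<bar> * \<bar>w y\<bar> * jbr x powr g"
          by (simp add: abs_mult)
        also have "\<dots> \<le> \<bar>k (x - y)\<bar> * \<bar>w y\<bar> * (2 powr (g/2) * jbr (x - y) powr g * jbr y powr g)"
          by (intro mult_left_mono peetre g) auto
        also have "\<dots> = 2 powr (g/2) * (a (x - y) * b y)" by (simp add: a_def b_def algebra_simps)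
        finally show ?thesis .
      qed
      show "integrable lborel (\<lambda>y. k (x - y) * w y * jbr x powr g)"
      proof (rule Bochner_Integration.integrable_bound[OF gi])
        show "(\<lambda>y. k (x - y) * w y * jbr x powr g) \<in> borel_measurable lborel" by measurable
        show "AE y in lborel. norm (k (x - y) * w y * jbr x powr g) \<le> norm (2 powr (g/2) * (a (x - y) * b y))"
          using bd a0 b0 by (intro AE_I2) (simp add: abs_mult)
      qed
      show "\<And>y. y \<in> space lborel \<Longrightarrow> \<bar>k (x - y) * w y * jbr x powr g\<bar> \<le> 2 powr (g/2) * (a (x - y) * b y)"
        using bd by simp
    qed
    also have "\<dots> = 2 powr (g/2) * T x" by (simp add: T_def)
    finally show ?thesis .
  qed
  have hb: "(conv k w x * jbr x powr g)\<^sup>2 \<le> 2 powr g * A * S x" for x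
  proof -
    have "(conv k w x * jbr x powr g)\<^sup>2 = (\<bar>conv k w x\<bar> * jbr x powr g)\<^sup>2"
      by (simp add: power2_eq_square abs_mult_self_eq)
    also have "\<dots> \<le> (2 powr (g/2) * T x)\<^sup>2"
      using pw[of x] by (intro power_mono) auto
    also have "\<dots> = 2 powr g * (T x)\<^sup>2"
    proof -
      have "(2 powr (g/2))\<^sup>2 = (2::real) powr g" by (simp add: power2_eq_square flip: powr_add)
      then show ?thesis by (simp add: power_mult_distrib)
    qed
    also have "\<dots> \<le> 2 powr g * (A * S x)" using TS[of x] by (intro mult_left_mono) auto
    finally show ?thesis by simp
  qed
  have B0: "0 \<le> B" unfolding B_def by simp
  have nnS: "(\<integral>\<^sup>+x. ennreal (S x) \<partial>lborel) = ennreal (A * B)"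
  proof -
    have "(\<integral>\<^sup>+x. ennreal (S x) \<partial>lborel) = (\<integral>\<^sup>+x. (\<integral>\<^sup>+y. ennreal (a (x - y) * (b y)\<^sup>2) \<partial>lborel) \<partial>lborel)"
      unfolding S_def using fb2i a0 by (intro nn_integral_cong) (simp add: nn_integral_eq_integral)
    also have "\<dots> = (\<integral>\<^sup>+y. (\<integral>\<^sup>+x. ennreal (a (x - y) * (b y)\<^sup>2) \<partial>lborel) \<partial>lborel)"
      by (rule lborel_pair.Fubini'[symmetric]) measurable
    also have "\<dots> = (\<integral>\<^sup>+y. ennreal ((b y)\<^sup>2) * ennreal A \<partial>lborel)"
    proof (rule nn_integral_cong)
      fix y
      have "(\<integral>\<^sup>+x. ennreal (a (x - y) * (b y)\<^sup>2) \<partial>lborel) = (\<integral>\<^sup>+x. ennreal ((b y)\<^sup>2) * ennreal (a (x - y)) \<partial>lborel)"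
        using a0 by (intro nn_integral_cong) (simp add: ennreal_mult' mult.commute)
      also have "\<dots> = ennreal ((b y)\<^sup>2) * (\<integral>\<^sup>+x. ennreal (a (x - y)) \<partial>lborel)"
        by (rule nn_integral_cmult) measurable
      also have "(\<integral>\<^sup>+x. ennreal (a (x - y)) \<partial>lborel) = (\<integral>\<^sup>+x. ennreal (a x) \<partial>lborel)"
        using nn_integral_real_affine[of "\<lambda>x. ennreal (a x)" 1 "-y"] by simp
      also have "\<dots> = ennreal A" unfolding A_def using ai a0 by (simp add: nn_integral_eq_integral)
      finally show "(\<integral>\<^sup>+x. ennreal (a (x - y) * (b y)\<^sup>2) \<partial>lborel) = ennreal ((b y)\<^sup>2) * ennreal A" .
    qed
    also have "\<dots> = (\<integral>\<^sup>+y. ennreal ((b y)\<^sup>2) \<partial>lborel) * ennreal A"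
      by (rule nn_integral_multc) measurable
    also have "(\<integral>\<^sup>+y. ennreal ((b y)\<^sup>2) \<partial>lborel) = ennreal B"
      unfolding B_def using bi by (simp add: nn_integral_eq_integral)
    finally show ?thesis using A0 B0 by (simp add: ennreal_mult' mult.commute)
  qed
  have S_meas[measurable]: "S \<in> borel_measurable borel" unfolding S_def[abs_def] by measurable
  have Si: "integrable lborel S"
    by (rule integrableI_nn_integral_finite[OF _ _ nnS]) (auto simp: S0)
  have SI: "(\<integral>x. S x \<partial>lborel) = A * B"
    using nnS Si S0 A0 B0 by (subst integral_eq_nn_integral) auto
  have cm[measurable]: "conv k w \<in> borel_measurable borel" unfolding conv_def[abs_def] by measurable
  have hi: "integrable lborel (\<lambda>x. (conv k w x * jbr x powr g)\<^sup>2)"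
  proof (rule Bochner_Integration.integrable_bound)
    show "integrable lborel (\<lambda>x. 2 powr g * A * S x)" using Si by simp
    show "(\<lambda>x. (conv k w x * jbr x powr g)\<^sup>2) \<in> borel_measurable lborel" by measurable
    show "AE x in lborel. norm ((conv k w x * jbr x powr g)\<^sup>2) \<le> norm (2 powr g * A * S x)"
      using hb A0 S0 by (intro AE_I2) simp
  qed
  have "(\<integral>x. (conv k w x * jbr x powr g)\<^sup>2 \<partial>lborel) \<le> (\<integral>x. 2 powr g * A * S x \<partial>lborel)"
    using hi Si hb by (intro integral_mono) auto
  also have "\<dots> = 2 powr g * A * (A * B)" using SI by simp
  also have "2 powr g * A * (A * B) = 2 powr g * (\<integral>z. \<bar>k z\<bar> * jbr z powr g \<partial>lborel)\<^sup>2 * (\<integral>x. (w x * jbr x powr g)\<^sup>2 \<partial>lborel)"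
  proof -
    have "B = (\<integral>x. (w x * jbr x powr g)\<^sup>2 \<partial>lborel)" unfolding B_def by (simp only: bsq)
    then show ?thesis by (simp add: A_def a_def power2_eq_square)
  qed
  finally show ?thesis using hi by simp
qed



lemma conv_alt: "conv k w x = (\<integral>z. k z * w (x - z) \<partial>lborel)"
  unfolding conv_def using lborel_integral_real_affine[of "-1" "\<lambda>y. k (x - y) * w y" x] by simp

lemma lip_bound:
  fixes w w' :: "real \<Rightarrow> real"
  assumes wd: "\<And>x. (w has_real_derivative w' x) (at x)" and b: "\<And>x. \<bar>w' x\<bar> \<le> M"
  shows "\<bar>w u - w v\<bar> \<le> M * \<bar>u - v\<bar>"
proof -
  have *: "\<bar>w b - w a\<bar> \<le> M * \<bar>b - a\<bar>" if ab: "a < b" for a b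
  proof -
    obtain z where "w b - w a = (b - a) * w' z" using MVT2[OF ab, of w w'] wd by blast
    then have "\<bar>w b - w a\<bar> = \<bar>b - a\<bar> * \<bar>w' z\<bar>" by (simp add: abs_mult)
    also have "\<dots> \<le> \<bar>b - a\<bar> * M" by (intro mult_left_mono b) auto
    finally show ?thesis by (simp add: mult.commute)
  qed
  consider "u < v" | "u = v" | "v < u" by linarith
  then show ?thesis
  proof cases
    case 1 then show ?thesis using *[OF 1] by (simp add: abs_minus_commute)
  next
    case 2 then show ?thesis by simp
  next
    case 3 then show ?thesis using *[OF 3] by simp
  qed
qed

lemma diff_int:
  fixes k w w' :: "real \<Rightarrow> real"
  assumes ki: "integrable lborel k" and km[measurable]: "k \<in> borel_measurable borel"
    and wd: "\<And>x. (w has_real_derivative w' x) (at x)"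
    and wb: "\<And>x. \<bar>w x\<bar> \<le> Bw" and w'b: "\<And>x. \<bar>w' x\<bar> \<le> M"
    and w'm[measurable]: "w' \<in> borel_measurable borel"
  shows "((\<lambda>x. \<integral>y. k y * w (x - y) \<partial>lborel) has_real_derivative (\<integral>y. k y * w' (x - y) \<partial>lborel)) (at x)"
proof -
  have wc: "continuous_on UNIV w"
    using wd by (intro continuous_at_imp_continuous_on ballI DERIV_isCont) auto
  have wm[measurable]: "w \<in> borel_measurable borel" by (rule borel_measurable_continuous_onI[OF wc])
  have kwi: "integrable lborel (\<lambda>y. k y * w (z - y))" for z
  proof (rule Bochner_Integration.integrable_bound)
    show "integrable lborel (\<lambda>y. Bw * k y)" using ki by simp
    show "(\<lambda>y. k y * w (z - y)) \<in> borel_measurable lborel" by measurable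
    show "AE y in lborel. norm (k y * w (z - y)) \<le> norm (Bw * k y)"
    proof (intro AE_I2)
      fix y
      have "\<bar>k y\<bar> * \<bar>w (z - y)\<bar> \<le> \<bar>k y\<bar> * Bw" by (intro mult_left_mono wb) auto
      moreover have "0 \<le> Bw" using wb[of 0] by linarith
      ultimately show "norm (k y * w (z - y)) \<le> norm (Bw * k y)" by (simp add: abs_mult mult.commute)
    qed
  qed
  show ?thesis
    unfolding has_field_derivative_iff tendsto_at_iff_sequentially
  proof (intro allI impI)
    fix X :: "nat \<Rightarrow> real"
    assume X: "\<forall>i. X i \<in> UNIV - {x}" and Xl: "X \<longlonglongrightarrow> x"
    define s where "s i y = k y * ((w (X i - y) - w (x - y)) / (X i - x))" for i y
    have eq: "((\<lambda>z. ((\<integral>y. k y * w (z - y) \<partial>lborel) - (\<integral>y. k y * w (x - y) \<partial>lborel)) / (z - x)) \<circ> X) i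
        = (\<integral>y. s i y \<partial>lborel)" for i
    proof -
      have "(\<integral>y. s i y \<partial>lborel) = (\<integral>y. (k y * w (X i - y) - k y * w (x - y)) / (X i - x) \<partial>lborel)"
        unfolding s_def by (simp add: algebra_simps diff_divide_distrib)
      also have "\<dots> = ((\<integral>y. k y * w (X i - y) \<partial>lborel) - (\<integral>y. k y * w (x - y) \<partial>lborel)) / (X i - x)"
        using kwi by simp
      finally show ?thesis by simp
    qed
    have "(\<lambda>i. \<integral>y. s i y \<partial>lborel) \<longlonglongrightarrow> (\<integral>y. k y * w' (x - y) \<partial>lborel)"
    proof (rule integral_dominated_convergence[where w="\<lambda>y. M * \<bar>k y\<bar>"])
      show "(\<lambda>y. k y * w' (x - y)) \<in> borel_measurable lborel" by measurable
      show "\<And>i. s i \<in> borel_measurable lborel" unfolding s_def by measurable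
      show "integrable lborel (\<lambda>y. M * \<bar>k y\<bar>)" using ki by simp
      show "AE y in lborel. (\<lambda>i. s i y) \<longlonglongrightarrow> k y * w' (x - y)"
      proof (intro AE_I2)
        fix y
        have d: "((\<lambda>z. (w z - w (x - y)) / (z - (x - y))) \<longlongrightarrow> w' (x - y)) (at (x - y))"
          using wd[of "x - y"] unfolding has_field_derivative_iff .
        have "(\<lambda>i. X i - y) \<longlonglongrightarrow> x - y" using Xl by (intro tendsto_intros)
        moreover have "\<forall>i. X i - y \<in> UNIV - {x - y}" using X by auto
        ultimately have "((\<lambda>z. (w z - w (x - y)) / (z - (x - y))) \<circ> (\<lambda>i. X i - y)) \<longlonglongrightarrow> w' (x - y)"
          using d[unfolded tendsto_at_iff_sequentially, rule_format, of "\<lambda>i. X i - y"] by blast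
        then have "(\<lambda>i. (w (X i - y) - w (x - y)) / (X i - x)) \<longlonglongrightarrow> w' (x - y)"
          by (simp add: o_def)
        then show "(\<lambda>i. s i y) \<longlonglongrightarrow> k y * w' (x - y)"
          unfolding s_def by (intro tendsto_intros)
      qed
      show "AE y in lborel. norm (s i y) \<le> M * \<bar>k y\<bar>" for i
      proof (intro AE_I2)
        fix y
        have ne: "X i - x \<noteq> 0" using X by auto
        have "\<bar>w (X i - y) - w (x - y)\<bar> \<le> M * \<bar>X i - x\<bar>"
          using lip_bound[OF wd w'b, of "X i - y" "x - y"] by simp
        then have "\<bar>(w (X i - y) - w (x - y)) / (X i - x)\<bar> \<le> M"
          using ne by (simp add: abs_divide divide_le_eq)
        then have "\<bar>k y\<bar> * \<bar>(w (X i - y) - w (x - y)) / (X i - x)\<bar> \<le> \<bar>k y\<bar> * M"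
          by (intro mult_left_mono) auto
        then show "norm (s i y) \<le> M * \<bar>k y\<bar>" unfolding s_def by (simp add: abs_mult mult.commute)
      qed
    qed
    then show "((\<lambda>z. ((\<integral>y. k y * w (z - y) \<partial>lborel) - (\<integral>y. k y * w (x - y) \<partial>lborel)) / (z - x)) \<circ> X)
        \<longlonglongrightarrow> (\<integral>y. k y * w' (x - y) \<partial>lborel)"
    proof -
      have "((\<lambda>z. ((\<integral>y. k y * w (z - y) \<partial>lborel) - (\<integral>y. k y * w (x - y) \<partial>lborel)) / (z - x)) \<circ> X)
          = (\<lambda>i. \<integral>y. s i y \<partial>lborel)" by (rule ext) (rule eq)
      with \<open>(\<lambda>i. \<integral>y. s i y \<partial>lborel) \<longlonglongrightarrow> _\<close> show ?thesis by simp
    qed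
  qed
qed

lemma int_bound:
  fixes k w :: "real \<Rightarrow> real"
  assumes ki: "integrable lborel k" and km[measurable]: "k \<in> borel_measurable borel"
    and wm[measurable]: "w \<in> borel_measurable borel" and wb: "\<And>x. \<bar>w x\<bar> \<le> Bw"
  shows "\<bar>\<integral>y. k y * w (x - y) \<partial>lborel\<bar> \<le> (\<integral>y. \<bar>k y\<bar> \<partial>lborel) * Bw"
    and "integrable lborel (\<lambda>y. k y * w (x - y))"
proof -
  have B0: "0 \<le> Bw" using wb[of 0] by linarith
  have bd: "\<bar>k y * w (x - y)\<bar> \<le> \<bar>k y\<bar> * Bw" for y
    by (simp add: abs_mult) (intro mult_left_mono wb, auto)
  show i: "integrable lborel (\<lambda>y. k y * w (x - y))"
  proof (rule Bochner_Integration.integrable_bound)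
    show "integrable lborel (\<lambda>y. \<bar>k y\<bar> * Bw)" using ki by simp
    show "(\<lambda>y. k y * w (x - y)) \<in> borel_measurable lborel" by measurable
    show "AE y in lborel. norm (k y * w (x - y)) \<le> norm (\<bar>k y\<bar> * Bw)"
      using bd B0 by (intro AE_I2) (simp add: abs_mult)
  qed
  have "\<bar>\<integral>y. k y * w (x - y) \<partial>lborel\<bar> \<le> (\<integral>y. \<bar>k y\<bar> * Bw \<partial>lborel)"
    using i ki bd by (intro integral_abs_bound_integral) auto
  then show "\<bar>\<integral>y. k y * w (x - y) \<partial>lborel\<bar> \<le> (\<integral>y. \<bar>k y\<bar> \<partial>lborel) * Bw" by simp
qed




lemma tail_deriv:
  fixes h :: "real \<Rightarrow> real"
  assumes hc: "continuous_on UNIV h" and hi: "\<And>a. set_integrable lborel {a..} h"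
  shows "((\<lambda>x. \<integral>y. indicator {x..} y * h y \<partial>lborel) has_real_derivative - h x) (at x)"
proof -
  define a where "a = x - 1"
  define b where "b = x + 1"
  have ab: "a < x" "x < b" by (auto simp: a_def b_def)
  have hm[measurable]: "h \<in> borel_measurable borel" by (rule borel_measurable_continuous_onI[OF hc])
  define T where "T u = (LINT y:{u..}|lborel. h y)" for u
  have Teq: "(\<lambda>x. \<integral>y. indicator {x..} y * h y \<partial>lborel) = T"
    by (rule ext) (simp add: T_def set_lebesgue_integral_def)
  have G: "((\<lambda>u. LBINT y=a..u. h y) has_vector_derivative h x) (at x within {a..b})"
    using ab by (intro interval_integral_FTC2 continuous_on_subset[OF hc]) auto
  then have G': "((\<lambda>u. LBINT y=a..u. h y) has_real_derivative h x) (at x)"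
    using ab by (simp add: at_within_Icc_at has_real_derivative_iff_has_vector_derivative)
  have D: "((\<lambda>u. T a - (LBINT y=a..u. h y)) has_real_derivative - h x) (at x)"
    by (rule derivative_eq_intros G' | simp)+
  show ?thesis unfolding Teq
  proof (rule has_field_derivative_transform_within_open[OF D, of "{a<..<b}"])
    show "open {a<..<b}" by simp
    show "x \<in> {a<..<b}" using ab by simp
    fix u assume u: "u \<in> {a<..<b}"
    have "{a..} = {a..u} \<union> {u..}" using u by auto
    then have "T a = (LINT y:{a..u} \<union> {u..}|lborel. h y)"
      by (simp add: T_def)
    also have "\<dots> = (LINT y:{a..u}|lborel. h y) + (LINT y:{u..}|lborel. h y)"
    proof (rule set_integral_Un_AE)
      show "AE y in lborel. \<not> (y \<in> {a..u} \<and> y \<in> {u..})"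
        using AE_lborel_singleton[of u] by eventually_elim auto
      show "set_integrable lborel {a..u} h"
        by (rule set_integrable_subset[OF hi[of a]]) auto
    qed (auto simp: hi)
    also have "(LINT y:{a..u}|lborel. h y) = (LBINT y=a..u. h y)"
      using u by (simp add: interval_integral_Icc)
    finally show "T a - (LBINT y=a..u. h y) = T u" by (simp add: T_def)
  qed
qed

lemma set_integrable_exp_Ici: fixes a :: real shows "set_integrable lborel {a..} (\<lambda>y. exp (- y))"
proof -
  have "(\<lambda>x. exp (-x)) absolutely_integrable_on {a..}"
    by (rule nonnegative_absolutely_integrable_1[OF integrable_on_exp_minus_to_infinity[of 1 a, simplified]]) auto
  then have "integrable lebesgue (\<lambda>x. indicator {a..} x *\<^sub>R exp (- x))"
    unfolding set_integrable_def by simp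
  then show ?thesis
    unfolding set_integrable_def by (subst (asm) integrable_completion) auto
qed

definition Ek :: "real \<Rightarrow> real" where "Ek z = indicator {..0} z * exp z"

lemma Ek_meas[measurable]: "Ek \<in> borel_measurable borel"
  unfolding Ek_def[abs_def] by measurable

lemma Ek_bound: "\<bar>Ek z\<bar> \<le> 1 * exp (- 1 * \<bar>z\<bar>)"
  by (simp add: Ek_def indicator_def)

lemma Ek_kern: "0 \<le> g \<Longrightarrow> kern g Ek"
  by (rule expb_kern[OF Ek_meas Ek_bound]) auto

lemma resolv_conv: "resolv w = conv Ek w"
  unfolding resolv_def conv_def Ek_def
  by (intro ext Bochner_Integration.integral_cong) (auto simp: indicator_def)

lemma resolv_bound:
  assumes wm[measurable]: "w \<in> borel_measurable borel" and wb: "\<And>x. \<bar>w x\<bar> \<le> Bw"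
  shows "\<bar>resolv w x\<bar> \<le> (\<integral>y. \<bar>Ek y\<bar> \<partial>lborel) * Bw"
  unfolding resolv_conv conv_alt
  by (rule int_bound(1)[OF kern_integrable[OF Ek_kern] Ek_meas wm wb]) auto

lemma resolv_deriv:
  assumes wc: "continuous_on UNIV w" and wb: "\<And>x. \<bar>w x\<bar> \<le> Bw"
  shows "(resolv w has_real_derivative resolv w x - w x) (at x)"
proof -
  define h where "h y = exp (- y) * w y" for y
  have wm[measurable]: "w \<in> borel_measurable borel" by (rule borel_measurable_continuous_onI[OF wc])
  have hc: "continuous_on UNIV h" unfolding h_def[abs_def] by (intro continuous_intros wc)
  have hi: "set_integrable lborel {a..} h" for a
    unfolding set_integrable_def
  proof (rule Bochner_Integration.integrable_bound)
    show "integrable lborel (\<lambda>y. Bw * (indicator {a..} y *\<^sub>R exp (- y)))"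
      using set_integrable_exp_Ici[of a] unfolding set_integrable_def by simp
    show "(\<lambda>y. indicator {a..} y *\<^sub>R h y) \<in> borel_measurable lborel" unfolding h_def by measurable
    show "AE y in lborel. norm (indicator {a..} y *\<^sub>R h y) \<le> norm (Bw * (indicator {a..} y *\<^sub>R exp (- y)))"
    proof (intro AE_I2)
      fix y
      have "\<bar>w y\<bar> * exp (- y) \<le> Bw * exp (- y)" by (intro mult_right_mono wb) auto
      moreover have "0 \<le> Bw" using wb[of 0] by linarith
      ultimately show "norm (indicator {a..} y *\<^sub>R h y) \<le> norm (Bw * (indicator {a..} y *\<^sub>R exp (- y)))"
        by (auto simp: h_def indicator_def abs_mult mult.commute)
    qed
  qed
  have eq: "resolv w = (\<lambda>x. exp x * (\<integral>y. indicator {x..} y * h y \<partial>lborel))"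
    unfolding resolv_def h_def
    by (rule ext, subst integral_mult_right_zero[symmetric])
       (intro Bochner_Integration.integral_cong, auto simp: exp_diff exp_minus field_simps)
  have "((\<lambda>x. exp x * (\<integral>y. indicator {x..} y * h y \<partial>lborel)) has_real_derivative
      exp x * (\<integral>y. indicator {x..} y * h y \<partial>lborel) + exp x * (- h x)) (at x)"
    by (rule derivative_eq_intros tail_deriv[OF hc hi] | simp)+
  moreover have "exp x * (\<integral>y. indicator {x..} y * h y \<partial>lborel) + exp x * (- h x) = resolv w x - w x"
    by (simp add: eq h_def exp_minus field_simps)
  ultimately show ?thesis by (simp add: eq)
qed

lemma resolv_unique:
  fixes f f' :: "real \<Rightarrow> real"
  assumes fd: "\<And>x. (f has_real_derivative f' x) (at x)" and fb: "\<And>x. \<bar>f x\<bar> \<le> Bf"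
    and wc: "continuous_on UNIV (\<lambda>x. f x - f' x)" and wb: "\<And>x. \<bar>f x - f' x\<bar> \<le> Bw"
  shows "resolv (\<lambda>x. f x - f' x) = f"
proof -
  define w where "w x = f x - f' x" for x
  have wc': "continuous_on UNIV w" using wc by (simp add: w_def[abs_def])
  have wm[measurable]: "w \<in> borel_measurable borel" by (rule borel_measurable_continuous_onI[OF wc'])
  define \<phi> where "\<phi> x = resolv w x - f x" for x
  have dphi: "(\<phi> has_real_derivative \<phi> x) (at x)" for x
  proof -
    have "(\<phi> has_real_derivative (resolv w x - w x) - f' x) (at x)"
      unfolding \<phi>_def[abs_def]
      by (intro derivative_intros resolv_deriv[OF wc', of Bw] fd) (simp add: w_def wb)
    then show ?thesis by (simp add: \<phi>_def w_def)
  qed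
  define CE where "CE = (\<integral>y. \<bar>Ek y\<bar> \<partial>lborel)"
  have phib: "\<bar>\<phi> x\<bar> \<le> CE * Bw + Bf" for x
  proof -
    have "\<bar>resolv w x\<bar> \<le> CE * Bw" unfolding CE_def
      by (rule resolv_bound[OF wm]) (simp add: w_def wb)
    then show ?thesis using fb[of x] by (simp add: \<phi>_def)
  qed
  define \<psi> where "\<psi> x = \<phi> x * exp (- x)" for x
  have "(\<psi> has_real_derivative 0) (at x)" for x
  proof -
    have "(\<psi> has_real_derivative \<phi> x * exp (- x) + \<phi> x * (exp (- x) * (- 1))) (at x)"
      unfolding \<psi>_def[abs_def] by (rule derivative_eq_intros dphi | simp)+
    then show ?thesis by simp
  qed
  then have c: "\<psi> x = \<psi> 0" for x by (intro DERIV_isconst_all) auto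
  have "\<psi> 0 = 0"
  proof (rule ccontr)
    assume ne: "\<psi> 0 \<noteq> 0"
    define M where "M = CE * Bw + Bf"
    have M0: "0 \<le> M" using phib[of 0] abs_ge_zero[of "\<phi> 0"] unfolding M_def by linarith
    define x where "x = ln ((M + 1) / \<bar>\<psi> 0\<bar>)"
    have "\<phi> x = \<psi> 0 * exp x" using c[of x] by (simp add: \<psi>_def exp_minus field_simps)
    then have "\<bar>\<phi> x\<bar> = \<bar>\<psi> 0\<bar> * exp x" by (simp add: abs_mult)
    also have "\<dots> = M + 1" using ne M0 by (simp add: x_def)
    finally show False using phib[of x] by (simp add: M_def)
  qed
  then have "\<phi> x = 0" for x using c[of x] by (simp add: \<psi>_def)
  then show ?thesis by (intro ext) (simp add: \<phi>_def w_def[abs_def])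
qed




lemma cs_bounded:
  fixes f :: "real \<Rightarrow> real"
  assumes fc: "continuous_on UNIV f" and fz: "\<And>x. R < \<bar>x\<bar> \<Longrightarrow> f x = 0"
  shows "\<exists>B. \<forall>x. \<bar>f x\<bar> \<le> B"
proof -
  have "compact (f ` {-R..R})" by (intro compact_continuous_image continuous_on_subset[OF fc]) auto
  then obtain a where a: "\<And>y. y \<in> f ` {-R..R} \<Longrightarrow> norm y \<le> a"
    using compact_imp_bounded bounded_iff by metis
  have "\<bar>f x\<bar> \<le> max a 0" for x
  proof (cases "\<bar>x\<bar> \<le> R")
    case True then have "x \<in> {-R..R}" by auto
    then show ?thesis using a[of "f x"] by auto
  next
    case False then show ?thesis using fz[of x] by auto
  qed
  then show ?thesis by blast
qed

lemma cs_integrable: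
  fixes f :: "real \<Rightarrow> real"
  assumes fc: "continuous_on UNIV f" and fz: "\<And>x. R < \<bar>x\<bar> \<Longrightarrow> f x = 0"
  shows "integrable lborel f"
proof -
  have "set_integrable lborel {-R..R} f"
    by (rule borel_integrable_atLeastAtMost'[OF continuous_on_subset[OF fc]]) auto
  then have "integrable lborel (\<lambda>x. indicator {-R..R} x *\<^sub>R f x)" by (simp add: set_integrable_def)
  moreover have "(\<lambda>x. indicator {-R..R} x *\<^sub>R f x) = f"
  proof (rule ext)
    fix x show "indicator {-R..R} x *\<^sub>R f x = f x"
      using fz[of x] by (cases "\<bar>x\<bar> \<le> R") (auto simp: indicator_def abs_le_iff)
  qed
  ultimately show ?thesis by simp
qed

lemma deriv_zero_outside:
  fixes f f' :: "real \<Rightarrow> real"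
  assumes fd: "\<And>x. (f has_real_derivative f' x) (at x)" and fz: "\<And>x. R < \<bar>x\<bar> \<Longrightarrow> f x = 0"
    and x: "R < \<bar>x\<bar>"
  shows "f' x = 0"
proof -
  have "(f has_real_derivative 0) (at x)"
  proof (cases "x > R")
    case True
    show ?thesis
    proof (rule has_field_derivative_transform_within_open[of "\<lambda>_. 0" 0 x "{R<..}"])
      show "((\<lambda>_. 0) has_real_derivative 0) (at x)" by simp
    qed (use True fz in auto)
  next
    case False
    then have xl: "x < -R" using x by auto
    show ?thesis
    proof (rule has_field_derivative_transform_within_open[of "\<lambda>_. 0" 0 x "{..<-R}"])
      show "((\<lambda>_. 0) has_real_derivative 0) (at x)" by simp
    qed (use xl fz in auto)
  qed
  then show ?thesis using fd[of x] DERIV_unique by blast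
qed

lemma test_facts:
  assumes "test_fun u"
  shows "\<exists>R. (\<forall>x. (u has_real_derivative deriv u x) (at x)) \<and>
    (\<forall>x. (deriv u has_real_derivative deriv (deriv u) x) (at x)) \<and>
    continuous_on UNIV (deriv (deriv u)) \<and>
    (\<forall>x. R < \<bar>x\<bar> \<longrightarrow> u x = 0) \<and> (\<forall>x. R < \<bar>x\<bar> \<longrightarrow> deriv u x = 0) \<and>
    (\<forall>x. R < \<bar>x\<bar> \<longrightarrow> deriv (deriv u) x = 0)"
proof -
  obtain R where R: "\<And>x. R < \<bar>x\<bar> \<Longrightarrow> u x = 0" using assms by (auto simp: test_fun_def)
  have dk: "(deriv ^^ k) u differentiable (at x)" for k x using assms by (auto simp: test_fun_def)
  have d0: "(u has_real_derivative deriv u x) (at x)" for x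
    using dk[of 0 x] by (simp add: DERIV_deriv_iff_real_differentiable)
  have d1: "(deriv u has_real_derivative deriv (deriv u) x) (at x)" for x
    using dk[of 1 x] by (simp add: DERIV_deriv_iff_real_differentiable)
  have d2: "(deriv (deriv u) has_real_derivative deriv (deriv (deriv u)) x) (at x)" for x
    using dk[of 2 x] by (simp add: DERIV_deriv_iff_real_differentiable numeral_2_eq_2)
  have c2: "continuous_on UNIV (deriv (deriv u))"
    using d2 by (intro continuous_at_imp_continuous_on ballI DERIV_isCont) auto
  have z1: "R < \<bar>x\<bar> \<Longrightarrow> deriv u x = 0" for x by (rule deriv_zero_outside[OF d0 R])
  have z2: "R < \<bar>x\<bar> \<Longrightarrow> deriv (deriv u) x = 0" for x by (rule deriv_zero_outside[OF d1 z1])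
  show ?thesis using d0 d1 c2 R z1 z2 by blast
qed

lemma diff_int2:
  fixes k w w' :: "real \<Rightarrow> real"
  assumes km[measurable]: "k \<in> borel_measurable borel" and kb: "\<And>z. \<bar>k z\<bar> \<le> Bk"
    and wd: "\<And>x. (w has_real_derivative w' x) (at x)"
    and wb: "\<And>x. \<bar>w x\<bar> \<le> Bw" and w'b: "\<And>x. \<bar>w' x\<bar> \<le> M"
    and w'm[measurable]: "w' \<in> borel_measurable borel"
    and wz: "\<And>x. R < \<bar>x\<bar> \<Longrightarrow> w x = 0"
  shows "((\<lambda>x. \<integral>y. k y * w (x - y) \<partial>lborel) has_real_derivative (\<integral>y. k y * w' (x - y) \<partial>lborel)) (at x)"
proof -
  have wc: "continuous_on UNIV w"
    using wd by (intro continuous_at_imp_continuous_on ballI DERIV_isCont) auto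
  have wm[measurable]: "w \<in> borel_measurable borel" by (rule borel_measurable_continuous_onI[OF wc])
  have Bk0: "0 \<le> Bk" using kb[of 0] by linarith
  have Bw0: "0 \<le> Bw" using wb[of 0] by linarith
  have M0: "0 \<le> M" using w'b[of 0] by linarith
  have ii: "integrable lborel (indicator {a..b} :: real \<Rightarrow> real)" for a b :: real
    by (rule integrable_real_indicator) (auto simp: emeasure_lborel_Icc_eq)
  have kwi: "integrable lborel (\<lambda>y. k y * w (z - y))" for z
  proof (rule Bochner_Integration.integrable_bound)
    show "integrable lborel (\<lambda>y. Bk * Bw * indicator {z - R..z + R} y)" using ii by simp
    show "(\<lambda>y. k y * w (z - y)) \<in> borel_measurable lborel" by measurable
    show "AE y in lborel. norm (k y * w (z - y)) \<le> norm (Bk * Bw * indicator {z - R..z + R} y :: real)"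
    proof (intro AE_I2)
      fix y
      show "norm (k y * w (z - y)) \<le> norm (Bk * Bw * indicator {z - R..z + R} y :: real)"
      proof (cases "R < \<bar>z - y\<bar>")
        case True then show ?thesis using wz by simp
      next
        case False
        then have "y \<in> {z - R..z + R}" by auto
        moreover have "\<bar>k y\<bar> * \<bar>w (z - y)\<bar> \<le> Bk * Bw" using kb wb Bk0 by (intro mult_mono) auto
        ultimately show ?thesis using Bk0 Bw0 by (simp add: abs_mult)
      qed
    qed
  qed
  show ?thesis
    unfolding has_field_derivative_iff tendsto_at_iff_sequentially
  proof (intro allI impI)
    fix X :: "nat \<Rightarrow> real"
    assume X: "\<forall>i. X i \<in> UNIV - {x}" and Xl: "X \<longlonglongrightarrow> x"
    have "Bseq X" using Xl by (rule convergent_imp_Bseq[OF convergentI])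
    then obtain K where K: "\<And>i. \<bar>X i\<bar> \<le> K" unfolding Bseq_def by auto
    define D where "D = K + \<bar>x\<bar>"
    have XD: "\<bar>X i - x\<bar> \<le> D" for i using K[of i] by (simp add: D_def)
    define s where "s i y = k y * ((w (X i - y) - w (x - y)) / (X i - x))" for i y
    have eq: "((\<lambda>z. ((\<integral>y. k y * w (z - y) \<partial>lborel) - (\<integral>y. k y * w (x - y) \<partial>lborel)) / (z - x)) \<circ> X) i
        = (\<integral>y. s i y \<partial>lborel)" for i
    proof -
      have "(\<integral>y. s i y \<partial>lborel) = (\<integral>y. (k y * w (X i - y) - k y * w (x - y)) / (X i - x) \<partial>lborel)"
        unfolding s_def by (simp add: algebra_simps diff_divide_distrib)
      also have "\<dots> = ((\<integral>y. k y * w (X i - y) \<partial>lborel) - (\<integral>y. k y * w (x - y) \<partial>lborel)) / (X i - x)"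
        using kwi by simp
      finally show ?thesis by simp
    qed
    have "(\<lambda>i. \<integral>y. s i y \<partial>lborel) \<longlonglongrightarrow> (\<integral>y. k y * w' (x - y) \<partial>lborel)"
    proof (rule integral_dominated_convergence[where w="\<lambda>y. M * Bk * indicator {x - (R + D)..x + (R + D)} y"])
      show "(\<lambda>y. k y * w' (x - y)) \<in> borel_measurable lborel" by measurable
      show "\<And>i. s i \<in> borel_measurable lborel" unfolding s_def by measurable
      show "integrable lborel (\<lambda>y. M * Bk * indicator {x - (R + D)..x + (R + D)} y)" using ii by simp
      show "AE y in lborel. (\<lambda>i. s i y) \<longlonglongrightarrow> k y * w' (x - y)"
      proof (intro AE_I2)
        fix y
        have d: "((\<lambda>z. (w z - w (x - y)) / (z - (x - y))) \<longlongrightarrow> w' (x - y)) (at (x - y))"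
          using wd[of "x - y"] unfolding has_field_derivative_iff .
        have "(\<lambda>i. X i - y) \<longlonglongrightarrow> x - y" using Xl by (intro tendsto_intros)
        moreover have "\<forall>i. X i - y \<in> UNIV - {x - y}" using X by auto
        ultimately have "((\<lambda>z. (w z - w (x - y)) / (z - (x - y))) \<circ> (\<lambda>i. X i - y)) \<longlonglongrightarrow> w' (x - y)"
          using d[unfolded tendsto_at_iff_sequentially, rule_format, of "\<lambda>i. X i - y"] by blast
        then have "(\<lambda>i. (w (X i - y) - w (x - y)) / (X i - x)) \<longlonglongrightarrow> w' (x - y)"
          by (simp add: o_def)
        then show "(\<lambda>i. s i y) \<longlonglongrightarrow> k y * w' (x - y)"
          unfolding s_def by (intro tendsto_intros)
      qed
      show "AE y in lborel. norm (s i y) \<le> M * Bk * indicator {x - (R + D)..x + (R + D)} y" for i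
      proof (intro AE_I2)
        fix y
        show "norm (s i y) \<le> M * Bk * indicator {x - (R + D)..x + (R + D)} y"
        proof (cases "y \<in> {x - (R + D)..x + (R + D)}")
          case False
          then have "R + D < \<bar>x - y\<bar>" by auto
          then have "R < \<bar>x - y\<bar>" "R < \<bar>X i - y\<bar>" using XD[of i] by auto
          then show ?thesis using wz M0 Bk0 by (simp add: s_def)
        next
          case True
          have ne: "X i - x \<noteq> 0" using X by auto
          have "\<bar>w (X i - y) - w (x - y)\<bar> \<le> M * \<bar>X i - x\<bar>"
            using lip_bound[OF wd w'b, of "X i - y" "x - y"] by simp
          then have "\<bar>(w (X i - y) - w (x - y)) / (X i - x)\<bar> \<le> M"
            using ne by (simp add: abs_divide divide_le_eq)
          then have "\<bar>k y\<bar> * \<bar>(w (X i - y) - w (x - y)) / (X i - x)\<bar> \<le> Bk * M"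
            using kb M0 Bk0 by (intro mult_mono) auto
          then show ?thesis using True unfolding s_def by (simp add: abs_mult mult.commute)
        qed
      qed
    qed
    then show "((\<lambda>z. ((\<integral>y. k y * w (z - y) \<partial>lborel) - (\<integral>y. k y * w (x - y) \<partial>lborel)) / (z - x)) \<circ> X)
        \<longlonglongrightarrow> (\<integral>y. k y * w' (x - y) \<partial>lborel)"
    proof -
      have "((\<lambda>z. ((\<integral>y. k y * w (z - y) \<partial>lborel) - (\<integral>y. k y * w (x - y) \<partial>lborel)) / (z - x)) \<circ> X)
          = (\<lambda>i. \<integral>y. s i y \<partial>lborel)" by (rule ext) (rule eq)
      with \<open>(\<lambda>i. \<integral>y. s i y \<partial>lborel) \<longlonglongrightarrow> _\<close> show ?thesis by simp
    qed
  qed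
qed

lemma conv_eq_alt: "conv k w = (\<lambda>x. \<integral>z. k z * w (x - z) \<partial>lborel)"
  by (rule ext) (rule conv_alt)

lemma conv_deriv:
  fixes k w w' :: "real \<Rightarrow> real"
  assumes "integrable lborel k" "k \<in> borel_measurable borel"
    and "\<And>x. (w has_real_derivative w' x) (at x)"
    and "\<And>x. \<bar>w x\<bar> \<le> Bw" "\<And>x. \<bar>w' x\<bar> \<le> M"
    and "w' \<in> borel_measurable borel"
  shows "(conv k w has_real_derivative conv k w' x) (at x)"
  unfolding conv_eq_alt by (rule diff_int[OF assms])

lemma conv_bnd:
  fixes k w :: "real \<Rightarrow> real"
  assumes "integrable lborel k" "k \<in> borel_measurable borel"
    and "w \<in> borel_measurable borel" and "\<And>x. \<bar>w x\<bar> \<le> Bw"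
  shows "\<bar>conv k w x\<bar> \<le> (\<integral>y. \<bar>k y\<bar> \<partial>lborel) * Bw"
  unfolding conv_alt by (rule int_bound(1)[OF assms])

lemma conv_diff:
  fixes k w1 w2 :: "real \<Rightarrow> real"
  assumes "integrable lborel k" "k \<in> borel_measurable borel"
    and "w1 \<in> borel_measurable borel" and "\<And>x. \<bar>w1 x\<bar> \<le> B1"
    and "w2 \<in> borel_measurable borel" and "\<And>x. \<bar>w2 x\<bar> \<le> B2"
  shows "conv k (\<lambda>y. w1 y - w2 y) x = conv k w1 x - conv k w2 x"
proof -
  have "conv k (\<lambda>y. w1 y - w2 y) x = (\<integral>z. k z * w1 (x - z) - k z * w2 (x - z) \<partial>lborel)"
    unfolding conv_alt by (simp add: algebra_simps)
  also have "\<dots> = conv k w1 x - conv k w2 x"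
    unfolding conv_alt
    by (rule Bochner_Integration.integral_diff[OF int_bound(2)[OF assms(1,2,3,4)] int_bound(2)[OF assms(1,2,5,6)]])
  finally show ?thesis .
qed

lemma sq_sum:
  fixes f h :: "real \<Rightarrow> real"
  assumes [measurable]: "f \<in> borel_measurable borel" "h \<in> borel_measurable borel"
    and fi: "integrable lborel (\<lambda>x. (f x * jbr x powr g)\<^sup>2)"
    and hi: "integrable lborel (\<lambda>x. (h x * jbr x powr g)\<^sup>2)"
  shows "integrable lborel (\<lambda>x. ((f x + h x) * jbr x powr g)\<^sup>2) \<and>
    (\<integral>x. ((f x + h x) * jbr x powr g)\<^sup>2 \<partial>lborel) \<le>
      2 * (\<integral>x. (f x * jbr x powr g)\<^sup>2 \<partial>lborel) + 2 * (\<integral>x. (h x * jbr x powr g)\<^sup>2 \<partial>lborel)"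
proof -
  have pt: "((f x + h x) * jbr x powr g)\<^sup>2 \<le> 2 * (f x * jbr x powr g)\<^sup>2 + 2 * (h x * jbr x powr g)\<^sup>2" for x
  proof -
    have "0 \<le> (f x * jbr x powr g - h x * jbr x powr g)\<^sup>2" by simp
    then show ?thesis by (simp add: power2_eq_square algebra_simps)
  qed
  have si: "integrable lborel (\<lambda>x. 2 * (f x * jbr x powr g)\<^sup>2 + 2 * (h x * jbr x powr g)\<^sup>2)"
    using fi hi by simp
  have i: "integrable lborel (\<lambda>x. ((f x + h x) * jbr x powr g)\<^sup>2)"
  proof (rule Bochner_Integration.integrable_bound[OF si])
    show "(\<lambda>x. ((f x + h x) * jbr x powr g)\<^sup>2) \<in> borel_measurable lborel" by measurable
    show "AE x in lborel. norm (((f x + h x) * jbr x powr g)\<^sup>2) \<le> norm (2 * (f x * jbr x powr g)\<^sup>2 + 2 * (h x * jbr x powr g)\<^sup>2)"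
      using pt by (intro AE_I2) simp
  qed
  have "(\<integral>x. ((f x + h x) * jbr x powr g)\<^sup>2 \<partial>lborel) \<le> (\<integral>x. 2 * (f x * jbr x powr g)\<^sup>2 + 2 * (h x * jbr x powr g)\<^sup>2 \<partial>lborel)"
    using i si pt by (intro integral_mono) auto
  also have "\<dots> = 2 * (\<integral>x. (f x * jbr x powr g)\<^sup>2 \<partial>lborel) + 2 * (\<integral>x. (h x * jbr x powr g)\<^sup>2 \<partial>lborel)"
    using fi hi by simp
  finally show ?thesis using i by simp
qed




lemma abs_int_le:
  fixes F G :: "real \<Rightarrow> real"
  assumes [measurable]: "F \<in> borel_measurable borel" and Gi: "integrable lborel G"
    and b: "\<And>t. \<bar>F t\<bar> \<le> G t"
  shows "\<bar>\<integral>t. F t \<partial>lborel\<bar> \<le> (\<integral>t. G t \<partial>lborel)" and "integrable lborel F"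
proof -
  show Fi: "integrable lborel F"
  proof (rule Bochner_Integration.integrable_bound[OF Gi])
    show "F \<in> borel_measurable lborel" by measurable
    show "AE x in lborel. norm (F x) \<le> norm (G x)"
      using b by (intro AE_I2) (smt (verit) abs_ge_zero real_norm_def)
  qed
  show "\<bar>\<integral>t. F t \<partial>lborel\<bar> \<le> (\<integral>t. G t \<partial>lborel)"
    by (rule integral_abs_bound_integral[OF Fi Gi]) (use b in auto)
qed

definition Pt :: "(real \<Rightarrow> real) \<Rightarrow> real \<Rightarrow> real" where
  "Pt J z = (\<integral>t. indicator {z..} t * J t \<partial>lborel)"

definition Kf :: "(real \<Rightarrow> real) \<Rightarrow> real \<Rightarrow> real" where
  "Kf J z = indicator {..0} z - Pt J z"

definition gk :: "(real \<Rightarrow> real) \<Rightarrow> real \<Rightarrow> real" where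
  "gk J z = Kf J z - J z"

context
  fixes J :: "real \<Rightarrow> real" and C \<eta> :: real
  assumes Jc: "continuous_on UNIV J"
    and Jb: "\<And>z. \<bar>J z\<bar> \<le> C * exp (- \<eta> * \<bar>z\<bar>)"
    and eta: "0 < \<eta>"
    and J1: "(\<integral>x. J x \<partial>lborel) = 1"
begin

lemma Jm[measurable]: "J \<in> borel_measurable borel"
  by (rule borel_measurable_continuous_onI[OF Jc])

lemma J_kern: "0 \<le> g \<Longrightarrow> kern g J"
  by (rule expb_kern[OF Jm Jb eta])

lemma Ji: "integrable lborel J"
  by (rule kern_integrable[OF J_kern[of 0]]) auto

lemma C0: "0 \<le> C"
proof -
  have "0 \<le> C * exp (- \<eta> * \<bar>0\<bar>)" using Jb[of 0] by (meson abs_ge_zero order_trans)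
  then show ?thesis by simp
qed

lemma J_le_C: "\<bar>J z\<bar> \<le> C"
proof -
  have "C * exp (- \<eta> * \<bar>z\<bar>) \<le> C * 1" using C0 eta by (intro mult_left_mono) auto
  then show ?thesis using Jb[of z] by simp
qed

lemma Pt_deriv: "(Pt J has_real_derivative - J x) (at x)"
proof -
  have "set_integrable lborel {a..} J" for a
    unfolding set_integrable_def by (rule integrable_mult_indicator[OF _ Ji]) auto
  then have "((\<lambda>x. \<integral>y. indicator {x..} y * J y \<partial>lborel) has_real_derivative - J x) (at x)"
    by (rule tail_deriv[OF Jc])
  then show ?thesis by (simp add: Pt_def[abs_def])
qed

lemma Pt_cont: "continuous_on UNIV (Pt J)"
  using Pt_deriv by (intro continuous_at_imp_continuous_on ballI DERIV_isCont) auto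

lemma Pt_meas[measurable]: "Pt J \<in> borel_measurable borel"
  by (rule borel_measurable_continuous_onI[OF Pt_cont])

lemma Pt_bound: "\<bar>Pt J z\<bar> \<le> (\<integral>t. \<bar>J t\<bar> \<partial>lborel)"
  unfolding Pt_def
  by (rule abs_int_le(1)) (use Ji in \<open>auto simp: indicator_def\<close>)

lemma Kf_meas[measurable]: "Kf J \<in> borel_measurable borel"
  unfolding Kf_def[abs_def] by measurable

lemma Kf_bound: "\<bar>Kf J z\<bar> \<le> (C * (\<integral>t. exp (- (\<eta>/2) * \<bar>t\<bar>) \<partial>lborel)) * exp (- (\<eta>/2) * \<bar>z\<bar>)"
proof -
  define ch :: "real \<Rightarrow> real" where "ch t = (if z \<le> 0 then 1 - indicator {z..} t else - indicator {z..} t)" for t :: real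
  have chm[measurable]: "ch \<in> borel_measurable borel" unfolding ch_def[abs_def] by measurable
  have Li: "integrable lborel (\<lambda>t. exp (- (\<eta>/2) * \<bar>t\<bar>))" using integrable_exp_abs[of "\<eta>/2"] eta by simp
  have eq: "Kf J z = (\<integral>t. ch t * J t \<partial>lborel)"
  proof (cases "z \<le> 0")
    case True
    have "(\<integral>t. ch t * J t \<partial>lborel) = (\<integral>t. J t - indicator {z..} t * J t \<partial>lborel)"
      using True by (simp add: ch_def algebra_simps)
    also have "\<dots> = 1 - Pt J z"
      unfolding Pt_def using J1
      by (subst Bochner_Integration.integral_diff[OF Ji integrable_mult_indicator[OF _ Ji, simplified]]) auto
    finally show ?thesis using True by (simp add: Kf_def)
  next
    case False
    have "(\<integral>t. ch t * J t \<partial>lborel) = (\<integral>t. - (indicator {z..} t * J t) \<partial>lborel)"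
      using False by (simp add: ch_def)
    also have "\<dots> = - Pt J z" unfolding Pt_def by simp
    finally show ?thesis using False by (simp add: Kf_def)
  qed
  have pw: "\<bar>ch t * J t\<bar> \<le> C * exp (- (\<eta>/2) * \<bar>t\<bar>) * exp (- (\<eta>/2) * \<bar>z\<bar>)" for t
  proof (cases "ch t = 0")
    case True then show ?thesis using C0 by simp
  next
    case False
    then have tz: "\<bar>z\<bar> \<le> \<bar>t\<bar>" and ch1: "\<bar>ch t\<bar> = 1"
      by (auto simp: ch_def indicator_def split: if_splits)
    have "\<bar>ch t * J t\<bar> = \<bar>J t\<bar>" using ch1 by (simp add: abs_mult)
    also have "\<dots> \<le> C * exp (- \<eta> * \<bar>t\<bar>)" by (rule Jb)
    also have "exp (- \<eta> * \<bar>t\<bar>) = exp (- (\<eta>/2) * \<bar>t\<bar>) * exp (- (\<eta>/2) * \<bar>t\<bar>)"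
      by (simp add: exp_add[symmetric])
    also have "\<dots> \<le> exp (- (\<eta>/2) * \<bar>t\<bar>) * exp (- (\<eta>/2) * \<bar>z\<bar>)"
      using tz eta by (intro mult_left_mono) auto
    finally show ?thesis using C0 by (simp add: mult.assoc mult_left_mono)
  qed
  have "\<bar>\<integral>t. ch t * J t \<partial>lborel\<bar> \<le> (\<integral>t. C * exp (- (\<eta>/2) * \<bar>t\<bar>) * exp (- (\<eta>/2) * \<bar>z\<bar>) \<partial>lborel)"
    by (rule abs_int_le(1)) (use Li pw in auto)
  also have "\<dots> = (C * (\<integral>t. exp (- (\<eta>/2) * \<bar>t\<bar>) \<partial>lborel)) * exp (- (\<eta>/2) * \<bar>z\<bar>)"
    by simp
  finally show ?thesis using eq by simp
qed

lemma gk_meas[measurable]: "gk J \<in> borel_measurable borel"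
  unfolding gk_def[abs_def] by measurable

lemma gk_kern: assumes "0 \<le> g" shows "kern g (gk J)"
proof -
  define L where "L = (\<integral>t. exp (- (\<eta>/2) * \<bar>t\<bar>) \<partial>lborel)"
  have "\<bar>gk J z\<bar> \<le> (C * L + C) * exp (- (\<eta>/2) * \<bar>z\<bar>)" for z
  proof -
    have "\<bar>gk J z\<bar> \<le> \<bar>Kf J z\<bar> + \<bar>J z\<bar>" by (simp add: gk_def)
    also have "\<dots> \<le> C * L * exp (- (\<eta>/2) * \<bar>z\<bar>) + C * exp (- \<eta> * \<bar>z\<bar>)"
      using Kf_bound[of z] Jb[of z] by (simp add: L_def)
    also have "C * exp (- \<eta> * \<bar>z\<bar>) \<le> C * exp (- (\<eta>/2) * \<bar>z\<bar>)"
      using C0 eta by (intro mult_left_mono) auto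
    finally show ?thesis by (simp add: algebra_simps)
  qed
  then show ?thesis by (intro expb_kern[OF gk_meas _ _ assms, of "C*L + C" "\<eta>/2"]) (use eta in auto)
qed

lemma gk_int: "integrable lborel (gk J)"
  by (rule kern_integrable[OF gk_kern[of 0]]) auto

end




lemma conv_ksub:
  fixes k1 k2 w :: "real \<Rightarrow> real"
  assumes [measurable]: "k1 \<in> borel_measurable borel" "k2 \<in> borel_measurable borel" "w \<in> borel_measurable borel"
    and b1: "\<And>z. \<bar>k1 z\<bar> \<le> B1" and b2: "\<And>z. \<bar>k2 z\<bar> \<le> B2" and wi: "integrable lborel w"
  shows "conv (\<lambda>z. k1 z - k2 z) w x = conv k1 w x - conv k2 w x"
proof -
  have i: "integrable lborel (\<lambda>y. k (x - y) * w y)" if km[measurable]: "k \<in> borel_measurable borel"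
    and kb: "\<And>z. \<bar>k z\<bar> \<le> B" for k B
  proof (rule abs_int_le(2))
    show "integrable lborel (\<lambda>y. B * \<bar>w y\<bar>)" using wi by simp
    show "\<bar>k (x - y) * w y\<bar> \<le> B * \<bar>w y\<bar>" for y by (simp add: abs_mult) (intro mult_right_mono kb, auto)
  qed measurable
  show ?thesis unfolding conv_def left_diff_distrib
    by (rule Bochner_Integration.integral_diff[OF i[OF _ b1] i[OF _ b2]]) measurable
qed

context
  fixes J :: "real \<Rightarrow> real" and C \<eta> :: real
  assumes Jc: "continuous_on UNIV J"
    and Jb: "\<And>z. \<bar>J z\<bar> \<le> C * exp (- \<eta> * \<bar>z\<bar>)"
    and eta: "0 < \<eta>"
    and J1: "(\<integral>x. J x \<partial>lborel) = 1"
begin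

lemmas JJ = Jc Jb eta J1

context
  fixes u u1 u2 :: "real \<Rightarrow> real" and R :: real
  assumes d0: "\<And>x. (u has_real_derivative u1 x) (at x)"
    and d1: "\<And>x. (u1 has_real_derivative u2 x) (at x)"
    and c2: "continuous_on UNIV u2"
    and z0: "\<And>x. R < \<bar>x\<bar> \<Longrightarrow> u x = 0"
    and z1: "\<And>x. R < \<bar>x\<bar> \<Longrightarrow> u1 x = 0"
    and z2: "\<And>x. R < \<bar>x\<bar> \<Longrightarrow> u2 x = 0"
begin

lemma uc: "continuous_on UNIV u"
  using d0 by (intro continuous_at_imp_continuous_on ballI DERIV_isCont) auto
lemma u1c: "continuous_on UNIV u1"
  using d1 by (intro continuous_at_imp_continuous_on ballI DERIV_isCont) auto
lemma um[measurable]: "u \<in> borel_measurable borel" by (rule borel_measurable_continuous_onI[OF uc])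
lemma u1m[measurable]: "u1 \<in> borel_measurable borel" by (rule borel_measurable_continuous_onI[OF u1c])
lemma u2m[measurable]: "u2 \<in> borel_measurable borel" by (rule borel_measurable_continuous_onI[OF c2])
lemma ui: "integrable lborel u" by (rule cs_integrable[OF uc z0])
lemma u1i: "integrable lborel u1" by (rule cs_integrable[OF u1c z1])
lemma ub: "\<exists>B. \<forall>x. \<bar>u x\<bar> \<le> B" by (rule cs_bounded[OF uc z0])
lemma u1b: "\<exists>B. \<forall>x. \<bar>u1 x\<bar> \<le> B" by (rule cs_bounded[OF u1c z1])
lemma u2b: "\<exists>B. \<forall>x. \<bar>u2 x\<bar> \<le> B" by (rule cs_bounded[OF c2 z2])

lemma convH: "conv (indicator {..0}) u1 x = - u x"
proof -
  define T where "T x = (\<integral>y. indicator {x..} y * u1 y \<partial>lborel)" for x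
  have eq: "conv (indicator {..0}) u1 x = T x" for x
    unfolding conv_def T_def by (intro Bochner_Integration.integral_cong) (auto simp: indicator_def)
  have si: "set_integrable lborel {a..} u1" for a
    unfolding set_integrable_def by (rule integrable_mult_indicator[OF _ u1i]) auto
  have dT: "(T has_real_derivative - u1 x) (at x)" for x
    unfolding T_def[abs_def] by (rule tail_deriv[OF u1c si])
  have "((\<lambda>x. T x + u x) has_real_derivative 0) (at x)" for x
    using DERIV_add[OF dT d0, of x] by simp
  then have c: "T x + u x = T (\<bar>R\<bar> + 1) + u (\<bar>R\<bar> + 1)" for x
    by (intro DERIV_isconst_all) auto
  have "T (\<bar>R\<bar> + 1) = 0" unfolding T_def
    by (rule integral_eq_zero_AE, rule AE_I2) (auto simp: indicator_def intro!: z1)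
  moreover have "u (\<bar>R\<bar> + 1) = 0" by (rule z0) auto
  ultimately show ?thesis using c[of x] eq[of x] by simp
qed

lemma convP: "conv (Pt J) u1 x = - conv J u x"
proof -
  obtain Bu where Bu: "\<And>x. \<bar>u x\<bar> \<le> Bu" using ub by blast
  obtain Bu1 where Bu1: "\<And>x. \<bar>u1 x\<bar> \<le> Bu1" using u1b by blast
  have PB: "\<bar>Pt J z\<bar> \<le> (\<integral>t. \<bar>J t\<bar> \<partial>lborel)" for z by (rule Pt_bound[OF JJ])
  have dP: "(Pt J has_real_derivative - J x) (at x)" for x by (rule Pt_deriv[OF JJ])
  have JC: "\<bar>- J x\<bar> \<le> C" for x using J_le_C[OF JJ] by simp
  have Jm[measurable]: "J \<in> borel_measurable borel" by (rule Jm[OF JJ])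
  have Pm[measurable]: "Pt J \<in> borel_measurable borel" by (rule Pt_meas[OF JJ])
  have e1: "conv (Pt J) u = (\<lambda>x. \<integral>y. u y * Pt J (x - y) \<partial>lborel)"
    unfolding conv_def by (simp add: mult.commute)
  have D1: "(conv (Pt J) u has_real_derivative (\<integral>y. u y * - J (x - y) \<partial>lborel)) (at x)"
    unfolding e1 by (rule diff_int[OF ui um dP PB JC]) measurable
  have D2: "(conv (Pt J) u has_real_derivative (\<integral>z. Pt J z * u1 (x - z) \<partial>lborel)) (at x)"
    unfolding conv_eq_alt by (rule diff_int2[OF Pm PB d0 Bu Bu1 u1m z0])
  have "(\<integral>z. Pt J z * u1 (x - z) \<partial>lborel) = (\<integral>y. u y * - J (x - y) \<partial>lborel)"
    using DERIV_unique[OF D2 D1] .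
  moreover have "conv (Pt J) u1 x = (\<integral>z. Pt J z * u1 (x - z) \<partial>lborel)" by (rule conv_alt)
  moreover have "conv J u x = (\<integral>y. u y * J (x - y) \<partial>lborel)" unfolding conv_def by (simp add: mult.commute)
  ultimately show ?thesis by simp
qed

lemma convK: "conv (Kf J) u1 x = conv J u x - u x"
proof -
  have "conv (Kf J) u1 x = conv (indicator {..0}) u1 x - conv (Pt J) u1 x"
    unfolding Kf_def[abs_def]
    by (rule conv_ksub[OF _ Pt_meas[OF JJ] u1m _ Pt_bound[OF JJ] u1i, of _ 1])
       (auto simp: indicator_def)
  then show ?thesis by (simp add: convH convP)
qed

lemma convG: "conv (gk J) u1 x = conv J u x - u x - conv J u1 x"
proof -
  define L where "L = (\<integral>t. exp (- (\<eta>/2) * \<bar>t\<bar>) \<partial>lborel)"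
  have L0: "0 \<le> L" unfolding L_def by simp
  have BK: "\<bar>Kf J z\<bar> \<le> C * L" for z
  proof -
    have "C * L * exp (- (\<eta>/2) * \<bar>z\<bar>) \<le> C * L * 1"
      using C0[OF JJ] L0 eta by (intro mult_left_mono) auto
    then show ?thesis using Kf_bound[OF JJ, of z] by (simp add: L_def)
  qed
  have "conv (gk J) u1 x = conv (Kf J) u1 x - conv J u1 x"
    unfolding gk_def[abs_def]
    by (rule conv_ksub[OF Kf_meas[OF JJ] Jm[OF JJ] u1m BK J_le_C[OF JJ] u1i])
  then show ?thesis by (simp add: convK)
qed

end
end



abbreviation Nm :: "real \<Rightarrow> (real \<Rightarrow> real) \<Rightarrow> real" where
  "Nm g f \<equiv> (\<integral>x. (f x * jbr x powr g)\<^sup>2 \<partial>lborel)"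

lemma jbr_ne0[simp]: "jbr x \<noteq> 0" using jbr_pos[of x] by simp

lemma Nm_nonneg: "0 \<le> Nm g f" by simp

lemma L2w_Nm: "L2w g f = sqrt (Nm g f)" by (simp add: L2w_def)

lemma sqrt_bound:
  assumes "a \<le> c * b" "0 \<le> c" shows "sqrt a \<le> sqrt c * sqrt b"
  using assms by (metis real_sqrt_le_mono real_sqrt_mult)

lemma J2_H1:
  fixes k w w' :: "real \<Rightarrow> real"
  assumes kk: "kern g k" and g: "0 \<le> g"
    and wd: "\<And>x. (w has_real_derivative w' x) (at x)"
    and wb: "\<And>x. \<bar>w x\<bar> \<le> Bw" and w'b: "\<And>x. \<bar>w' x\<bar> \<le> Bw'" and w'c: "continuous_on UNIV w'"
    and wi: "integrable lborel (\<lambda>x. (w x * jbr x powr g)\<^sup>2)"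
    and w'i: "integrable lborel (\<lambda>x. (w' x * jbr x powr g)\<^sup>2)"
  shows "in_H1w g (\<lambda>x. w x + conv k w x) \<and>
    H1w_norm g (\<lambda>x. w x + conv k w x) \<le> sqrt (2 + 2 * (2 powr g * (\<integral>z. \<bar>k z\<bar> * jbr z powr g \<partial>lborel)\<^sup>2)) * H1w_norm g w"
proof -
  define Ck where "Ck = 2 powr g * (\<integral>z. \<bar>k z\<bar> * jbr z powr g \<partial>lborel)\<^sup>2"
  have Ck0: "0 \<le> Ck" unfolding Ck_def by simp
  have km[measurable]: "k \<in> borel_measurable borel" using kk by (rule kern_meas)
  have ki: "integrable lborel k" by (rule kern_integrable[OF kk g])
  have wc: "continuous_on UNIV w"
    using wd by (intro continuous_at_imp_continuous_on ballI DERIV_isCont) auto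
  have wm[measurable]: "w \<in> borel_measurable borel" by (rule borel_measurable_continuous_onI[OF wc])
  have w'm[measurable]: "w' \<in> borel_measurable borel" by (rule borel_measurable_continuous_onI[OF w'c])
  have cwm[measurable]: "conv k f \<in> borel_measurable borel" if [measurable]: "f \<in> borel_measurable borel" for f
    unfolding conv_def[abs_def] by measurable
  have dV: "((\<lambda>x. w x + conv k w x) has_real_derivative w' x + conv k w' x) (at x)" for x
    by (intro DERIV_add wd conv_deriv[OF ki km wd wb w'b w'm])
  have derV: "deriv (\<lambda>x. w x + conv k w x) = (\<lambda>x. w' x + conv k w' x)"
    using dV by (intro ext DERIV_imp_deriv)
  have derw: "deriv w = w'" using wd by (intro ext DERIV_imp_deriv)
  have Y1: "integrable lborel (\<lambda>x. (conv k w x * jbr x powr g)\<^sup>2) \<and> Nm g (conv k w) \<le> Ck * Nm g w"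
    using young_w[OF kk g wm wi] by (simp add: Ck_def)
  have Y2: "integrable lborel (\<lambda>x. (conv k w' x * jbr x powr g)\<^sup>2) \<and> Nm g (conv k w') \<le> Ck * Nm g w'"
    using young_w[OF kk g w'm w'i] by (simp add: Ck_def)
  have S1: "integrable lborel (\<lambda>x. ((w x + conv k w x) * jbr x powr g)\<^sup>2) \<and>
      Nm g (\<lambda>x. w x + conv k w x) \<le> 2 * Nm g w + 2 * Nm g (conv k w)"
    using sq_sum[OF wm cwm[OF wm] wi] Y1 by blast
  have S2: "integrable lborel (\<lambda>x. ((w' x + conv k w' x) * jbr x powr g)\<^sup>2) \<and>
      Nm g (\<lambda>x. w' x + conv k w' x) \<le> 2 * Nm g w' + 2 * Nm g (conv k w')"
    using sq_sum[OF w'm cwm[OF w'm] w'i] Y2 by blast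
  have N1: "Nm g (\<lambda>x. w x + conv k w x) \<le> (2 + 2 * Ck) * Nm g w"
    using S1 Y1 by (simp add: algebra_simps)
  have N2: "Nm g (\<lambda>x. w' x + conv k w' x) \<le> (2 + 2 * Ck) * Nm g w'"
    using S2 Y2 by (simp add: algebra_simps)
  have "H1w_norm g (\<lambda>x. w x + conv k w x) =
      sqrt (Nm g (\<lambda>x. w x + conv k w x)) + sqrt (Nm g (\<lambda>x. w' x + conv k w' x))"
    by (simp add: H1w_norm_def L2w_def derV)
  also have "\<dots> \<le> sqrt (2 + 2 * Ck) * sqrt (Nm g w) + sqrt (2 + 2 * Ck) * sqrt (Nm g w')"
    using Ck0 by (intro add_mono sqrt_bound N1 N2) auto
  also have "\<dots> = sqrt (2 + 2 * Ck) * H1w_norm g w"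
    by (simp add: H1w_norm_def L2w_def derw algebra_simps)
  finally have B: "H1w_norm g (\<lambda>x. w x + conv k w x) \<le> sqrt (2 + 2 * Ck) * H1w_norm g w" .
  have "in_H1w g (\<lambda>x. w x + conv k w x)"
    unfolding in_H1w_def derV using S1 S2 dV by (auto simp: real_differentiable_def)
  then show ?thesis using B by (simp add: Ck_def)
qed

context
  fixes u u1 u2 :: "real \<Rightarrow> real" and R :: real
  assumes d0: "\<And>x. (u has_real_derivative u1 x) (at x)"
    and d1: "\<And>x. (u1 has_real_derivative u2 x) (at x)"
    and c2: "continuous_on UNIV u2"
    and z0: "\<And>x. R < \<bar>x\<bar> \<Longrightarrow> u x = 0"
    and z1: "\<And>x. R < \<bar>x\<bar> \<Longrightarrow> u1 x = 0"
    and z2: "\<And>x. R < \<bar>x\<bar> \<Longrightarrow> u2 x = 0"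
begin

lemma vc: "continuous_on UNIV u"
  using d0 by (intro continuous_at_imp_continuous_on ballI DERIV_isCont) auto
lemma v1c: "continuous_on UNIV u1"
  using d1 by (intro continuous_at_imp_continuous_on ballI DERIV_isCont) auto
lemma vm[measurable]: "u \<in> borel_measurable borel" by (rule borel_measurable_continuous_onI[OF vc])
lemma v1m[measurable]: "u1 \<in> borel_measurable borel" by (rule borel_measurable_continuous_onI[OF v1c])

lemma wsq_int: "integrable lborel (\<lambda>x. (u x * jbr x powr g)\<^sup>2)"
  by (rule cs_integrable[of _ R]) (auto intro!: continuous_intros vc simp: z0)
lemma wsq_int1: "integrable lborel (\<lambda>x. (u1 x * jbr x powr g)\<^sup>2)"
  by (rule cs_integrable[of _ R]) (auto intro!: continuous_intros v1c simp: z1)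

lemma Dop_H1:
  assumes g: "0 \<le> g"
  defines "Du \<equiv> (\<lambda>x. resolv u x - u x)"
  shows "Dop u = Du \<and> (\<forall>x. (Du has_real_derivative Du x - u1 x) (at x)) \<and>
    (\<exists>B. \<forall>x. \<bar>Du x\<bar> \<le> B) \<and> (\<exists>B. \<forall>x. \<bar>Du x - u1 x\<bar> \<le> B) \<and>
    continuous_on UNIV (\<lambda>x. Du x - u1 x) \<and>
    integrable lborel (\<lambda>x. (Du x * jbr x powr g)\<^sup>2) \<and>
    integrable lborel (\<lambda>x. ((Du x - u1 x) * jbr x powr g)\<^sup>2) \<and>
    in_H1w g Du \<and>
    H1w_norm g Du \<le> (sqrt (2 powr g * (\<integral>z. \<bar>Ek z\<bar> * jbr z powr g \<partial>lborel)\<^sup>2) +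
        sqrt (2 * (2 powr g * (\<integral>z. \<bar>Ek z\<bar> * jbr z powr g \<partial>lborel)\<^sup>2) + 2)) * sqrt (Nm g u1)"
proof -
  define CE where "CE = 2 powr g * (\<integral>z. \<bar>Ek z\<bar> * jbr z powr g \<partial>lborel)\<^sup>2"
  have CE0: "0 \<le> CE" unfolding CE_def by simp
  obtain Bu where Bu: "\<And>x. \<bar>u x\<bar> \<le> Bu" using cs_bounded[OF vc z0] by blast
  obtain Bu1 where Bu1: "\<And>x. \<bar>u1 x\<bar> \<le> Bu1" using cs_bounded[OF v1c z1] by blast
  have rd: "(resolv u has_real_derivative resolv u x - u x) (at x)" for x
    by (rule resolv_deriv[OF vc Bu])
  have dDu: "(Du has_real_derivative Du x - u1 x) (at x)" for x
    unfolding Du_def using DERIV_diff[OF rd d0, of x] by simp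
  have DopE: "Dop u = Du" unfolding Dop_def Du_def using rd by (intro ext DERIV_imp_deriv)
  have Duc: "continuous_on UNIV Du"
    using dDu by (intro continuous_at_imp_continuous_on ballI DERIV_isCont) auto
  have Dum[measurable]: "Du \<in> borel_measurable borel" by (rule borel_measurable_continuous_onI[OF Duc])
  have BDu: "\<bar>Du x\<bar> \<le> (\<integral>y. \<bar>Ek y\<bar> \<partial>lborel) * Bu + Bu" for x
    using resolv_bound[OF vm Bu, of x] Bu[of x] by (simp add: Du_def)
  have BDu': "\<bar>Du x - u1 x\<bar> \<le> (\<integral>y. \<bar>Ek y\<bar> \<partial>lborel) * Bu + Bu + Bu1" for x
    using BDu[of x] Bu1[of x] by simp
  have c': "continuous_on UNIV (\<lambda>x. Du x - u1 x)" by (intro continuous_intros Duc v1c)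
  \<comment> \<open>Du = resolv u1 = conv Ek u1\<close>
  have "resolv (\<lambda>x. Du x - (Du x - u1 x)) = Du"
    by (rule resolv_unique[OF dDu BDu]) (use v1c Bu1 in auto)
  then have DuE: "Du = conv Ek u1" by (simp add: resolv_conv)
  have Y: "integrable lborel (\<lambda>x. (Du x * jbr x powr g)\<^sup>2) \<and> Nm g Du \<le> CE * Nm g u1"
    unfolding DuE using young_w[OF Ek_kern[OF g] g v1m wsq_int1] by (simp add: CE_def)
  have S: "integrable lborel (\<lambda>x. ((Du x + - u1 x) * jbr x powr g)\<^sup>2) \<and>
      Nm g (\<lambda>x. Du x + - u1 x) \<le> 2 * Nm g Du + 2 * Nm g (\<lambda>x. - u1 x)"
    by (rule sq_sum) (use Y wsq_int1 in auto)
  have Si: "integrable lborel (\<lambda>x. ((Du x - u1 x) * jbr x powr g)\<^sup>2)" using S by simp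
  have S2: "Nm g (\<lambda>x. Du x - u1 x) \<le> (2 * CE + 2) * Nm g u1"
    using S Y by (simp add: algebra_simps)
  have derDu: "deriv Du = (\<lambda>x. Du x - u1 x)" using dDu by (intro ext DERIV_imp_deriv)
  have "H1w_norm g Du = sqrt (Nm g Du) + sqrt (Nm g (\<lambda>x. Du x - u1 x))"
    by (simp add: H1w_norm_def L2w_def derDu)
  also have "\<dots> \<le> sqrt CE * sqrt (Nm g u1) + sqrt (2 * CE + 2) * sqrt (Nm g u1)"
    using CE0 Y S2 by (intro add_mono sqrt_bound) auto
  finally have HB: "H1w_norm g Du \<le> (sqrt CE + sqrt (2 * CE + 2)) * sqrt (Nm g u1)"
    by (simp add: algebra_simps)
  have inH: "in_H1w g Du"
    unfolding in_H1w_def derDu using Y Si dDu by (auto simp: real_differentiable_def)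
  show ?thesis
    using DopE dDu BDu BDu' c' Y Si inH HB unfolding CE_def by blast
qed

lemma M12_bound:
  assumes "deriv u = u1"
  shows "sqrt (Nm g u1) \<le> M12_norm (g - 1) u"
  unfolding M12_norm_def assms
  by (rule real_sqrt_le_mono) simp

end




context
  fixes J :: "real \<Rightarrow> real" and C \<eta> :: real
  assumes Jc: "continuous_on UNIV J"
    and Jb: "\<And>z. \<bar>J z\<bar> \<le> C * exp (- \<eta> * \<bar>z\<bar>)"
    and eta: "0 < \<eta>"
    and J1: "(\<integral>x. J x \<partial>lborel) = 1"
begin

lemmas JJ' = Jc Jb eta J1

context
  fixes u u1 u2 :: "real \<Rightarrow> real" and R :: real
  assumes d0: "\<And>x. (u has_real_derivative u1 x) (at x)"
    and d1: "\<And>x. (u1 has_real_derivative u2 x) (at x)"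
    and c2: "continuous_on UNIV u2"
    and z0: "\<And>x. R < \<bar>x\<bar> \<Longrightarrow> u x = 0"
    and z1: "\<And>x. R < \<bar>x\<bar> \<Longrightarrow> u1 x = 0"
    and z2: "\<And>x. R < \<bar>x\<bar> \<Longrightarrow> u2 x = 0"
begin

lemmas UU = d0 d1 c2 z0 z1 z2

lemma ident:
  "(\<lambda>x. conv J u x - u x) = Dop (\<lambda>x. u x + conv (gk J) u x) \<and>
   (\<lambda>x. conv J u x - u x) = (\<lambda>x. Dop u x + conv (gk J) (Dop u) x)"
proof -
  define g where "g = gk J"
  have gi: "integrable lborel g" unfolding g_def by (rule gk_int[OF JJ'])
  have gm[measurable]: "g \<in> borel_measurable borel" unfolding g_def by (rule gk_meas[OF JJ'])
  have Ji: "integrable lborel J" by (rule Ji[OF JJ'])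
  have Jm[measurable]: "J \<in> borel_measurable borel" by (rule Jm[OF JJ'])
  have um[measurable]: "u \<in> borel_measurable borel" by (rule vm[OF UU])
  have u1m[measurable]: "u1 \<in> borel_measurable borel" by (rule v1m[OF UU])
  have u2m[measurable]: "u2 \<in> borel_measurable borel" by (rule borel_measurable_continuous_onI[OF c2])
  have u1c: "continuous_on UNIV u1" by (rule v1c[OF UU])
  have uc: "continuous_on UNIV u" by (rule vc[OF UU])
  obtain Bu where Bu: "\<And>x. \<bar>u x\<bar> \<le> Bu" using cs_bounded[OF uc z0] by blast
  obtain Bu1 where Bu1: "\<And>x. \<bar>u1 x\<bar> \<le> Bu1" using cs_bounded[OF u1c z1] by blast
  obtain Bu2 where Bu2: "\<And>x. \<bar>u2 x\<bar> \<le> Bu2" using cs_bounded[OF c2 z2] by blast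
  have dgu: "(conv g u has_real_derivative conv g u1 x) (at x)" for x
    by (rule conv_deriv[OF gi gm d0 Bu Bu1 u1m])
  have dgu1: "(conv g u1 has_real_derivative conv g u2 x) (at x)" for x
    by (rule conv_deriv[OF gi gm d1 Bu1 Bu2 u2m])
  have dJu: "(conv J u has_real_derivative conv J u1 x) (at x)" for x
    by (rule conv_deriv[OF Ji Jm d0 Bu Bu1 u1m])
  have dJu1: "(conv J u1 has_real_derivative conv J u2 x) (at x)" for x
    by (rule conv_deriv[OF Ji Jm d1 Bu1 Bu2 u2m])
  have cont: "continuous_on UNIV f" if "\<And>x. (f has_real_derivative f' x) (at x)" for f f' :: "real \<Rightarrow> real"
    using that by (intro continuous_at_imp_continuous_on ballI DERIV_isCont) auto
  have bJu: "\<bar>conv J u x\<bar> \<le> (\<integral>y. \<bar>J y\<bar> \<partial>lborel) * Bu" for x by (rule conv_bnd[OF Ji Jm um Bu])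
  have bJu1: "\<bar>conv J u1 x\<bar> \<le> (\<integral>y. \<bar>J y\<bar> \<partial>lborel) * Bu1" for x by (rule conv_bnd[OF Ji Jm u1m Bu1])
  have bgu: "\<bar>conv g u x\<bar> \<le> (\<integral>y. \<bar>g y\<bar> \<partial>lborel) * Bu" for x by (rule conv_bnd[OF gi gm um Bu])
  have bgu1: "\<bar>conv g u1 x\<bar> \<le> (\<integral>y. \<bar>g y\<bar> \<partial>lborel) * Bu1" for x by (rule conv_bnd[OF gi gm u1m Bu1])
  have cg: "conv g u1 x = conv J u x - u x - conv J u1 x" for x
    unfolding g_def by (rule convG[OF JJ' UU])
  define J2u where "J2u x = u x + conv g u x" for x
  have J2uc: "continuous_on UNIV J2u" unfolding J2u_def[abs_def]
    by (intro continuous_intros uc cont[OF dgu])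
  have J2ub: "\<bar>J2u x\<bar> \<le> Bu + (\<integral>y. \<bar>g y\<bar> \<partial>lborel) * Bu" for x
    using Bu[of x] bgu[of x] abs_triangle_ineq[of "u x" "conv g u x"] unfolding J2u_def by linarith
  have rJ: "(resolv J2u has_real_derivative resolv J2u x - J2u x) (at x)" for x
    by (rule resolv_deriv[OF J2uc J2ub])
  have DopJ2: "Dop J2u = (\<lambda>x. resolv J2u x - J2u x)"
    unfolding Dop_def using rJ by (intro ext DERIV_imp_deriv)
  define f where "f x = (conv J u x - u x) + J2u x" for x
  define f' where "f' x = (conv J u1 x - u1 x) + (u1 x + conv g u1 x)" for x
  have df: "(f has_real_derivative f' x) (at x)" for x
    unfolding f_def[abs_def] f'_def J2u_def[abs_def]
    by (intro DERIV_add DERIV_diff dJu d0 dgu)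
  have fb: "\<bar>f x\<bar> \<le> (\<integral>y. \<bar>J y\<bar> \<partial>lborel) * Bu + Bu + (Bu + (\<integral>y. \<bar>g y\<bar> \<partial>lborel) * Bu)" for x
    using bJu[of x] Bu[of x] J2ub[of x] abs_triangle_ineq[of "conv J u x - u x" "J2u x"]
      abs_triangle_ineq4[of "conv J u x" "u x"] unfolding f_def by linarith
  have eqf: "(\<lambda>x. f x - f' x) = J2u" by (rule ext) (simp add: f_def f'_def J2u_def cg)
  have "resolv (\<lambda>x. f x - f' x) = f"
  proof (rule resolv_unique[OF df fb, of "Bu + (\<integral>y. \<bar>g y\<bar> \<partial>lborel) * Bu"])
    show "continuous_on UNIV (\<lambda>x. f x - f' x)" unfolding eqf by (rule J2uc)
    show "\<bar>f x - f' x\<bar> \<le> Bu + (\<integral>y. \<bar>g y\<bar> \<partial>lborel) * Bu" for x using J2ub[of x] fun_cong[OF eqf, of x] by simp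
  qed
  then have rf: "resolv J2u = f" by (simp only: eqf)
  have I: "(\<lambda>x. conv J u x - u x) = Dop (\<lambda>x. u x + conv g u x)"
  proof -
    have "(\<lambda>x. u x + conv g u x) = J2u" by (simp add: J2u_def[abs_def])
    then show ?thesis by (simp add: DopJ2 rf f_def)
  qed
  define Du where "Du = (\<lambda>x. resolv u x - u x)"
  have DH: "Dop u = Du \<and> (\<forall>x. (Du has_real_derivative Du x - u1 x) (at x)) \<and>
    (\<exists>B. \<forall>x. \<bar>Du x\<bar> \<le> B) \<and> (\<exists>B. \<forall>x. \<bar>Du x - u1 x\<bar> \<le> B) \<and>
    continuous_on UNIV (\<lambda>x. Du x - u1 x)"
    using Dop_H1[OF UU, where g=0] unfolding Du_def by simp
  then have DopE: "Dop u = Du" and dDu: "\<And>x. (Du has_real_derivative Du x - u1 x) (at x)"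
    and cDu': "continuous_on UNIV (\<lambda>x. Du x - u1 x)" by auto
  obtain BD where BD: "\<And>x. \<bar>Du x\<bar> \<le> BD" using DH by blast
  obtain BD' where BD': "\<And>x. \<bar>Du x - u1 x\<bar> \<le> BD'" using DH by blast
  have Duc: "continuous_on UNIV Du" by (rule cont[OF dDu])
  have Dum[measurable]: "Du \<in> borel_measurable borel" by (rule borel_measurable_continuous_onI[OF Duc])
  have Du'm[measurable]: "(\<lambda>x. Du x - u1 x) \<in> borel_measurable borel" by measurable
  have dgD: "(conv g Du has_real_derivative conv g (\<lambda>x. Du x - u1 x) x) (at x)" for x
    by (rule conv_deriv[OF gi gm dDu BD BD' Du'm])
  have bgD: "\<bar>conv g Du x\<bar> \<le> (\<integral>y. \<bar>g y\<bar> \<partial>lborel) * BD" for x by (rule conv_bnd[OF gi gm Dum BD])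
  have cd: "conv g (\<lambda>y. Du y - u1 y) x = conv g Du x - conv g u1 x" for x
    by (rule conv_diff[OF gi gm Dum BD u1m Bu1])
  define G where "G x = Du x + conv g Du x" for x
  define G' where "G' x = (Du x - u1 x) + conv g (\<lambda>x. Du x - u1 x) x" for x
  have dG: "(G has_real_derivative G' x) (at x)" for x
    unfolding G_def[abs_def] G'_def by (intro DERIV_add dDu dgD)
  have Gb: "\<bar>G x\<bar> \<le> BD + (\<integral>y. \<bar>g y\<bar> \<partial>lborel) * BD" for x
    using BD[of x] bgD[of x] abs_triangle_ineq[of "Du x" "conv g Du x"] unfolding G_def by linarith
  define W where "W x = u1 x + conv g u1 x" for x
  have Wc: "continuous_on UNIV W" unfolding W_def[abs_def] by (intro continuous_intros u1c cont[OF dgu1])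
  have Wb: "\<bar>W x\<bar> \<le> Bu1 + (\<integral>y. \<bar>g y\<bar> \<partial>lborel) * Bu1" for x
    using Bu1[of x] bgu1[of x] abs_triangle_ineq[of "u1 x" "conv g u1 x"] unfolding W_def by linarith
  have eqG: "(\<lambda>x. G x - G' x) = W" by (rule ext) (simp add: G_def G'_def W_def cd)
  have "resolv (\<lambda>x. G x - G' x) = G"
  proof (rule resolv_unique[OF dG Gb, of "Bu1 + (\<integral>y. \<bar>g y\<bar> \<partial>lborel) * Bu1"])
    show "continuous_on UNIV (\<lambda>x. G x - G' x)" unfolding eqG by (rule Wc)
    show "\<bar>G x - G' x\<bar> \<le> Bu1 + (\<integral>y. \<bar>g y\<bar> \<partial>lborel) * Bu1" for x using Wb[of x] fun_cong[OF eqG, of x] by simp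
  qed
  then have rG: "resolv W = G" by (simp only: eqG)
  define F where "F x = conv J u x - u x" for x
  define F' where "F' x = conv J u1 x - u1 x" for x
  have dF: "(F has_real_derivative F' x) (at x)" for x
    unfolding F_def[abs_def] F'_def by (intro DERIV_diff dJu d0)
  have Fb: "\<bar>F x\<bar> \<le> (\<integral>y. \<bar>J y\<bar> \<partial>lborel) * Bu + Bu" for x
    using bJu[of x] Bu[of x] abs_triangle_ineq4[of "conv J u x" "u x"] unfolding F_def by linarith
  have eqF: "(\<lambda>x. F x - F' x) = W" by (rule ext) (simp add: F_def F'_def W_def cg)
  have "resolv (\<lambda>x. F x - F' x) = F"
  proof (rule resolv_unique[OF dF Fb, of "Bu1 + (\<integral>y. \<bar>g y\<bar> \<partial>lborel) * Bu1"])
    show "continuous_on UNIV (\<lambda>x. F x - F' x)" unfolding eqF by (rule Wc)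
    show "\<bar>F x - F' x\<bar> \<le> Bu1 + (\<integral>y. \<bar>g y\<bar> \<partial>lborel) * Bu1" for x using Wb[of x] fun_cong[OF eqF, of x] by simp
  qed
  then have rF: "resolv W = F" by (simp only: eqF)
  have II: "(\<lambda>x. conv J u x - u x) = (\<lambda>x. Dop u x + conv g (Dop u) x)"
  proof -
    have "(\<lambda>x. conv J u x - u x) = F" by (simp add: F_def[abs_def])
    also have "\<dots> = G" using rF rG by simp
    also have "\<dots> = (\<lambda>x. Dop u x + conv g (Dop u) x)" by (simp add: G_def[abs_def] DopE)
    finally show ?thesis .
  qed
  show ?thesis using I II by (simp add: g_def)
qed

end
end




theorem lemma4p5:
  fixes J :: "real \<Rightarrow> real" and \<gamma> :: real
  assumes "exp_localized J"
    and "\<And>x. J (- x) = J x"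
    and "\<And>x. J differentiable (at x)"
    and "\<And>x. deriv J differentiable (at x)"
    and "continuous_on UNIV (deriv (deriv J))"
    and "(\<integral>x. J x \<partial>lborel) = 1"
    and "0 < \<gamma>"
  shows "\<exists>(c::real) (g::real \<Rightarrow> real). integrable lborel g \<and>
    (let J2 = (\<lambda>u x. c * u x + conv g u x) in
      (\<forall>u. test_fun u \<longrightarrow>
          (\<lambda>x. conv J u x - u x) = Dop (J2 u) \<and>
          (\<lambda>x. conv J u x - u x) = J2 (Dop u) \<and>
          Dop (J2 u) = J2 (Dop u)) \<and>
      (\<exists>C. \<forall>u. test_fun u \<longrightarrow>
          in_H1w \<gamma> (J2 u) \<and> H1w_norm \<gamma> (J2 u) \<le> C * H1w_norm \<gamma> u) \<and>
      (\<exists>C. \<forall>u. test_fun u \<longrightarrow>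
          in_H1w \<gamma> (Dop u) \<and> H1w_norm \<gamma> (Dop u) \<le> C * M12_norm (\<gamma> - 1) u) \<and>
      (\<exists>C. \<forall>u. test_fun u \<longrightarrow>
          in_H1w \<gamma> (J2 (Dop u)) \<and> H1w_norm \<gamma> (J2 (Dop u)) \<le> C * M12_norm (\<gamma> - 1) u))"
proof -
  obtain C \<eta> where eta: "0 < \<eta>" and Jb: "\<And>x. \<bar>J x\<bar> \<le> C * exp (- \<eta> * \<bar>x\<bar>)"
    using assms(1) unfolding exp_localized_def by blast
  have Jc: "continuous_on UNIV J"
    using assms(3) by (intro continuous_at_imp_continuous_on ballI differentiable_imp_continuous_within) auto
  note JJ = Jc Jb eta assms(6)
  have g0: "0 \<le> \<gamma>" using assms(7) by simp
  define g where "g = gk J"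
  have gkern: "kern \<gamma> g" unfolding g_def by (rule gk_kern[OF JJ g0])
  have gi: "integrable lborel g" unfolding g_def by (rule gk_int[OF JJ])
  define Cg where "Cg = 2 powr \<gamma> * (\<integral>z. \<bar>g z\<bar> * jbr z powr \<gamma> \<partial>lborel)\<^sup>2"
  define CE where "CE = 2 powr \<gamma> * (\<integral>z. \<bar>Ek z\<bar> * jbr z powr \<gamma> \<partial>lborel)\<^sup>2"
  define CD where "CD = sqrt CE + sqrt (2 * CE + 2)"
  have CD0: "0 \<le> CD" unfolding CD_def CE_def by simp
  have Cg0: "0 \<le> sqrt (2 + 2 * Cg)" unfolding Cg_def by simp
  have TF: "\<exists>R. (\<forall>x. (u has_real_derivative deriv u x) (at x)) \<and>
    (\<forall>x. (deriv u has_real_derivative deriv (deriv u) x) (at x)) \<and>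
    continuous_on UNIV (deriv (deriv u)) \<and>
    (\<forall>x. R < \<bar>x\<bar> \<longrightarrow> u x = 0) \<and> (\<forall>x. R < \<bar>x\<bar> \<longrightarrow> deriv u x = 0) \<and>
    (\<forall>x. R < \<bar>x\<bar> \<longrightarrow> deriv (deriv u) x = 0)" if "test_fun u" for u
    by (rule test_facts[OF that])
  have A: "(\<lambda>x. conv J u x - u x) = Dop (\<lambda>x. u x + conv g u x) \<and>
          (\<lambda>x. conv J u x - u x) = (\<lambda>x. Dop u x + conv g (Dop u) x)" if tu: "test_fun u" for u
  proof -
    obtain R where R: "\<And>x. (u has_real_derivative deriv u x) (at x)"
      "\<And>x. (deriv u has_real_derivative deriv (deriv u) x) (at x)"
      "continuous_on UNIV (deriv (deriv u))"
      "\<And>x. R < \<bar>x\<bar> \<Longrightarrow> u x = 0" "\<And>x. R < \<bar>x\<bar> \<Longrightarrow> deriv u x = 0"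
      "\<And>x. R < \<bar>x\<bar> \<Longrightarrow> deriv (deriv u) x = 0" using TF[OF tu] by blast
    show ?thesis unfolding g_def by (rule ident[OF JJ R])
  qed
  have DH: "Dop u = (\<lambda>x. resolv u x - u x) \<and>
    (\<forall>x. ((\<lambda>x. resolv u x - u x) has_real_derivative (resolv u x - u x) - deriv u x) (at x)) \<and>
    (\<exists>B. \<forall>x. \<bar>resolv u x - u x\<bar> \<le> B) \<and> (\<exists>B. \<forall>x. \<bar>(resolv u x - u x) - deriv u x\<bar> \<le> B) \<and>
    continuous_on UNIV (\<lambda>x. (resolv u x - u x) - deriv u x) \<and>
    integrable lborel (\<lambda>x. ((resolv u x - u x) * jbr x powr \<gamma>)\<^sup>2) \<and>
    integrable lborel (\<lambda>x. (((resolv u x - u x) - deriv u x) * jbr x powr \<gamma>)\<^sup>2) \<and>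
    in_H1w \<gamma> (\<lambda>x. resolv u x - u x) \<and>
    H1w_norm \<gamma> (\<lambda>x. resolv u x - u x) \<le> CD * M12_norm (\<gamma> - 1) u" if tu: "test_fun u" for u
  proof -
    obtain R where R: "\<And>x. (u has_real_derivative deriv u x) (at x)"
      "\<And>x. (deriv u has_real_derivative deriv (deriv u) x) (at x)"
      "continuous_on UNIV (deriv (deriv u))"
      "\<And>x. R < \<bar>x\<bar> \<Longrightarrow> u x = 0" "\<And>x. R < \<bar>x\<bar> \<Longrightarrow> deriv u x = 0"
      "\<And>x. R < \<bar>x\<bar> \<Longrightarrow> deriv (deriv u) x = 0" using TF[OF tu] by blast
    have M: "sqrt (Nm \<gamma> (deriv u)) \<le> M12_norm (\<gamma> - 1) u" by (rule M12_bound[OF R refl])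
    have D: "H1w_norm \<gamma> (\<lambda>x. resolv u x - u x) \<le> CD * sqrt (Nm \<gamma> (deriv u))"
      using Dop_H1[OF R g0] unfolding CD_def CE_def by blast
    also have "\<dots> \<le> CD * M12_norm (\<gamma> - 1) u" by (intro mult_left_mono M CD0)
    finally show ?thesis using Dop_H1[OF R g0] by blast
  qed
  show ?thesis
  proof (intro exI[of _ 1] exI[of _ g] conjI gi, unfold Let_def, intro conjI)
    show "\<forall>u. test_fun u \<longrightarrow>
        (\<lambda>x. conv J u x - u x) = Dop (\<lambda>x. 1 * u x + conv g u x) \<and>
        (\<lambda>x. conv J u x - u x) = (\<lambda>x. 1 * Dop u x + conv g (Dop u) x) \<and>
        Dop (\<lambda>x. 1 * u x + conv g u x) = (\<lambda>x. 1 * Dop u x + conv g (Dop u) x)"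
      using A by (simp del: Dop_def) metis
    show "\<exists>C. \<forall>u. test_fun u \<longrightarrow> in_H1w \<gamma> (\<lambda>x. 1 * u x + conv g u x) \<and>
        H1w_norm \<gamma> (\<lambda>x. 1 * u x + conv g u x) \<le> C * H1w_norm \<gamma> u"
    proof (intro exI[of _ "sqrt (2 + 2 * Cg)"] allI impI)
      fix u assume tu: "test_fun u"
      obtain R where R: "\<And>x. (u has_real_derivative deriv u x) (at x)"
        "\<And>x. (deriv u has_real_derivative deriv (deriv u) x) (at x)"
        "continuous_on UNIV (deriv (deriv u))"
        "\<And>x. R < \<bar>x\<bar> \<Longrightarrow> u x = 0" "\<And>x. R < \<bar>x\<bar> \<Longrightarrow> deriv u x = 0"
        "\<And>x. R < \<bar>x\<bar> \<Longrightarrow> deriv (deriv u) x = 0" using TF[OF tu] by blast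
      obtain Bu where Bu: "\<And>x. \<bar>u x\<bar> \<le> Bu" using cs_bounded[OF vc[OF R] R(4)] by blast
      obtain Bu1 where Bu1: "\<And>x. \<bar>deriv u x\<bar> \<le> Bu1" using cs_bounded[OF v1c[OF R] R(5)] by blast
      show "in_H1w \<gamma> (\<lambda>x. 1 * u x + conv g u x) \<and>
          H1w_norm \<gamma> (\<lambda>x. 1 * u x + conv g u x) \<le> sqrt (2 + 2 * Cg) * H1w_norm \<gamma> u"
        using J2_H1[OF gkern g0 R(1) Bu Bu1 v1c[OF R] wsq_int[OF R] wsq_int1[OF R]]
        by (simp add: Cg_def)
    qed
    show "\<exists>C. \<forall>u. test_fun u \<longrightarrow> in_H1w \<gamma> (Dop u) \<and> H1w_norm \<gamma> (Dop u) \<le> C * M12_norm (\<gamma> - 1) u"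
    proof (intro exI[of _ CD] allI impI)
      fix u assume tu: "test_fun u"
      show "in_H1w \<gamma> (Dop u) \<and> H1w_norm \<gamma> (Dop u) \<le> CD * M12_norm (\<gamma> - 1) u"
        using DH[OF tu] by simp
    qed
    show "\<exists>C. \<forall>u. test_fun u \<longrightarrow> in_H1w \<gamma> (\<lambda>x. 1 * Dop u x + conv g (Dop u) x) \<and>
        H1w_norm \<gamma> (\<lambda>x. 1 * Dop u x + conv g (Dop u) x) \<le> C * M12_norm (\<gamma> - 1) u"
    proof (intro exI[of _ "sqrt (2 + 2 * Cg) * CD"] allI impI)
      fix u assume tu: "test_fun u"
      define Du where "Du = (\<lambda>x. resolv u x - u x)"
      have DH': "Dop u = Du \<and> (\<forall>x. (Du has_real_derivative Du x - deriv u x) (at x)) \<and>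
        (\<exists>B. \<forall>x. \<bar>Du x\<bar> \<le> B) \<and> (\<exists>B. \<forall>x. \<bar>Du x - deriv u x\<bar> \<le> B) \<and>
        continuous_on UNIV (\<lambda>x. Du x - deriv u x) \<and>
        integrable lborel (\<lambda>x. (Du x * jbr x powr \<gamma>)\<^sup>2) \<and>
        integrable lborel (\<lambda>x. ((Du x - deriv u x) * jbr x powr \<gamma>)\<^sup>2) \<and>
        H1w_norm \<gamma> Du \<le> CD * M12_norm (\<gamma> - 1) u"
        using DH[OF tu] unfolding Du_def by blast
      then obtain B1 B2 where B1: "\<And>x. \<bar>Du x\<bar> \<le> B1" and B2: "\<And>x. \<bar>Du x - deriv u x\<bar> \<le> B2" by blast
      have dD: "\<And>x. (Du has_real_derivative Du x - deriv u x) (at x)" using DH' by blast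
      have J: "in_H1w \<gamma> (\<lambda>x. Du x + conv g Du x) \<and>
          H1w_norm \<gamma> (\<lambda>x. Du x + conv g Du x) \<le> sqrt (2 + 2 * Cg) * H1w_norm \<gamma> Du"
        using J2_H1[OF gkern g0 dD B1 B2] DH' by (simp add: Cg_def)
      have "sqrt (2 + 2 * Cg) * H1w_norm \<gamma> Du \<le> sqrt (2 + 2 * Cg) * (CD * M12_norm (\<gamma> - 1) u)"
        using DH' Cg0 by (intro mult_left_mono) auto
      then show "in_H1w \<gamma> (\<lambda>x. 1 * Dop u x + conv g (Dop u) x) \<and>
          H1w_norm \<gamma> (\<lambda>x. 1 * Dop u x + conv g (Dop u) x) \<le> sqrt (2 + 2 * Cg) * CD * M12_norm (\<gamma> - 1) u"
        using J DH' by (simp add: mult.assoc)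
    qed
  qed
qed



end
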